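(* Let $(A,B,C,D)$ be an impedance passive linear system on Hilbert spaces $(U,X,U)$ and let $Q\in\mathcal{L}(U)$ satisfy $\operatorname{Re}Q\geq cI$ for some $c>0$. Then $I+DQ$ is boundedly invertible, and if we define $$A_Q=A-BQ(I+DQ)^{-1}C \ (D(A_Q)=D(A)),\quad B_Q=B(I+QD)^{-1},\quad C_Q=(I+DQ)^{-1}C,\quad D_Q=(I+DQ)^{-1}D,$$ then $(A_Q,B_Q,C_Q,D_Q)$ is an impedance passive linear system on $(U,X,U)$. Moreover, for all $\lambda\in\rho(A_Q)$ with $\operatorname{Re}\lambda\geq 0$, $$\|R(\lambda,A_Q)B_Q\|^2\leq c^{-1}\|R(\lambda,A_Q)\|,\qquad \|C_QR(\lambda,A_Q)\|^2\leq c^{-1}\|R(\lambda,A_Q)\|,\qquad \|C_QR(\lambda,A_Q)B_Q+D_Q\|\leq c^{-1}.$$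
   Context: $\operatorname{Re}T=\frac12(T+T^* )$ for bounded $T$; $R(\lambda,A)=(\lambda-A)^{-1}$. A tuple $(A,B,C,D)$ is an impedance passive linear system on $(U,X,U)$ (Hilbert spaces) if: $B\in\mathcal{L}(U,X)$, $C\in\mathcal{L}(X,U)$, $D\in\mathcal{L}(U)$; $A:D(A)\subset X\to X$ generates a $C_0$-semigroup on $X$; and $\operatorname{Re}\langle Ax+Bu,x\rangle_X\leq\operatorname{Re}\langle Cx+Du,u\rangle_U$ for all $x\in D(A)$, $u\in U$. *)

theory Defs
  imports "HOL-Analysis.Analysis"
begin

class complex_vector = real_vector +
  fixes scaleC :: "complex \<Rightarrow> 'a \<Rightarrow> 'a" (infixr \<open>*\<^sub>C\<close> 75)
  assumes scaleR_scaleC: "scaleR r = scaleC (complex_of_real r)"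
    and scaleC_add_right: "a *\<^sub>C (x + y) = a *\<^sub>C x + a *\<^sub>C y"
    and scaleC_add_left: "(a + b) *\<^sub>C x = a *\<^sub>C x + b *\<^sub>C x"
    and scaleC_scaleC: "a *\<^sub>C (b *\<^sub>C x) = (a * b) *\<^sub>C x"
    and scaleC_one: "1 *\<^sub>C x = x"

class complex_hilbert = complex_vector + real_inner + complete_space +
  assumes norm_scaleC: "norm (a *\<^sub>C x) = cmod a * norm x"

instantiation complex :: complex_vector
begin
definition scaleC_complex :: "complex \<Rightarrow> complex \<Rightarrow> complex" where "scaleC_complex a x = a * x"
instance by standard (auto simp: scaleC_complex_def scaleR_conv_of_real algebra_simps fun_eq_iff)
end

instance complex :: complex_hilbert
  by standard (simp add: scaleC_complex_def norm_mult)

definition bounded_clinear :: "('a::complex_hilbert \<Rightarrow> 'b::complex_hilbert) \<Rightarrow> bool" where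
  "bounded_clinear f \<longleftrightarrow> bounded_linear f \<and> (\<forall>a x. f (a *\<^sub>C x) = a *\<^sub>C f x)"

text \<open>Complex Hilbert spaces are modelled by the class complex_hilbert: the norm comes from the
  real inner product, which is the real part of the complex inner product
  (multiplication by i is an isometry, hence by polarisation the real inner
  product determines a unique compatible complex inner product).
  Thus Re <x,y> is written  inner x y.\<close>

definition c0_semigroup :: "(real \<Rightarrow> 'x::complex_hilbert \<Rightarrow> 'x) \<Rightarrow> bool" where
  "c0_semigroup T \<longleftrightarrow>
     (\<forall>t\<ge>0. bounded_clinear (T t)) \<and>
     T 0 = id \<and>
     (\<forall>s\<ge>0. \<forall>t\<ge>0. T (s + t) = T s \<circ> T t) \<and>
     (\<forall>x. ((\<lambda>t. T t x) \<longlongrightarrow> x) (at_right 0))"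

definition generates_c0 :: "'x::complex_hilbert set \<Rightarrow> ('x \<Rightarrow> 'x) \<Rightarrow> bool" where
  "generates_c0 DA A \<longleftrightarrow>
     (\<exists>T. c0_semigroup T \<and>
          DA = {x. \<exists>y. ((\<lambda>h. (1 / h) *\<^sub>R (T h x - x)) \<longlongrightarrow> y) (at_right 0)} \<and>
          (\<forall>x\<in>DA. ((\<lambda>h. (1 / h) *\<^sub>R (T h x - x)) \<longlongrightarrow> A x) (at_right 0)))"

definition impedance_passive ::
  "'x::complex_hilbert set \<Rightarrow> ('x \<Rightarrow> 'x) \<Rightarrow>
   ('u::complex_hilbert \<Rightarrow> 'x) \<Rightarrow> ('x \<Rightarrow> 'u) \<Rightarrow> ('u \<Rightarrow> 'u) \<Rightarrow> bool" where
  "impedance_passive DA A B C D \<longleftrightarrow>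
     bounded_clinear B \<and> bounded_clinear C \<and> bounded_clinear D \<and>
     generates_c0 DA A \<and>
     (\<forall>x\<in>DA. \<forall>u. inner (A x + B u) x \<le> inner (C x + D u) u)"

definition in_resolvent_set :: "'x::complex_hilbert set \<Rightarrow> ('x \<Rightarrow> 'x) \<Rightarrow> complex \<Rightarrow> bool" where
  "in_resolvent_set DA A lam \<longleftrightarrow>
     bij_betw (\<lambda>x. lam *\<^sub>C x - A x) DA UNIV \<and>
     bounded_clinear (the_inv_into DA (\<lambda>x. lam *\<^sub>C x - A x))"

definition resolvent :: "'x::complex_hilbert set \<Rightarrow> ('x \<Rightarrow> 'x) \<Rightarrow> complex \<Rightarrow> 'x \<Rightarrow> 'x" where
  "resolvent DA A lam = the_inv_into DA (\<lambda>x. lam *\<^sub>C x - A x)"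

definition boundedly_invertible :: "('u::complex_hilbert \<Rightarrow> 'u) \<Rightarrow> bool" where
  "boundedly_invertible T \<longleftrightarrow> bounded_clinear T \<and>
     (\<exists>S. bounded_clinear S \<and> S \<circ> T = id \<and> T \<circ> S = id)"

end

theory Submission
  imports Defs
begin

lemma scaleR_C: "r *\<^sub>R (x::'a::complex_vector) = complex_of_real r *\<^sub>C x"
  by (simp add: scaleR_scaleC)

lemma scaleC_bl: "bounded_linear (\<lambda>x::'a::complex_hilbert. a *\<^sub>C x)"
proof (rule bounded_linear_intro[where K="cmod a"])
  fix x y :: 'a show "a *\<^sub>C (x + y) = a *\<^sub>C x + a *\<^sub>C y" by (rule scaleC_add_right)
next
  fix r and x :: 'a show "a *\<^sub>C (r *\<^sub>R x) = r *\<^sub>R (a *\<^sub>C x)"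
    by (simp add: scaleR_C scaleC_scaleC mult.commute)
next
  fix x :: 'a show "norm (a *\<^sub>C x) \<le> norm x * cmod a" by (simp add: norm_scaleC mult.commute)
qed

lemma scaleC_zero_right[simp]: "a *\<^sub>C (0::'a::complex_hilbert) = 0"
  using linear_0[OF bounded_linear.linear[OF scaleC_bl]] by blast

lemma scaleC_minus_right: "a *\<^sub>C (x - y::'a::complex_hilbert) = a *\<^sub>C x - a *\<^sub>C y"
  using linear_diff[OF bounded_linear.linear[OF scaleC_bl]] by blast

lemma inner_i_self: "inner (\<i> *\<^sub>C x) (x::'a::complex_hilbert) = 0"
proof -
  have e: "x + \<i> *\<^sub>C x = (1 + \<i>) *\<^sub>C x" by (simp add: scaleC_add_left scaleC_one)
  have "(norm (x + \<i> *\<^sub>C x))^2 = (cmod (1 + \<i>))^2 * (norm x)^2"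
    unfolding e norm_scaleC by (simp add: power_mult_distrib)
  also have "(cmod (1 + \<i>))^2 = 2" by (simp add: cmod_power2)
  finally have 1: "(norm (x + \<i> *\<^sub>C x))^2 = 2 * (norm x)^2" .
  have 2: "norm (\<i> *\<^sub>C x) = norm x" by (simp add: norm_scaleC)
  have "(norm (x + \<i> *\<^sub>C x))^2 = (norm x)^2 + 2 * inner (\<i> *\<^sub>C x) x + (norm (\<i> *\<^sub>C x))^2"
    by (simp add: power2_norm_eq_inner inner_add_left inner_add_right inner_commute)
  with 1 2 show ?thesis by simp
qed

lemma scaleC_decomp: "a *\<^sub>C (x::'a::complex_hilbert) = Re a *\<^sub>R x + Im a *\<^sub>R (\<i> *\<^sub>C x)"
proof -
  have "a = complex_of_real (Re a) + complex_of_real (Im a) * \<i>" by (simp add: complex_eq_iff)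
  then have "a *\<^sub>C x = (complex_of_real (Re a) + complex_of_real (Im a) * \<i>) *\<^sub>C x"
    by (rule arg_cong[where f="\<lambda>b. b *\<^sub>C x"])
  also have "\<dots> = complex_of_real (Re a) *\<^sub>C x + (complex_of_real (Im a) * \<i>) *\<^sub>C x"
    by (rule scaleC_add_left)
  also have "\<dots> = Re a *\<^sub>R x + Im a *\<^sub>R (\<i> *\<^sub>C x)"
    by (simp add: scaleR_C scaleC_scaleC)
  finally show ?thesis .
qed

lemma inner_scaleC_self: "inner (a *\<^sub>C x) (x::'a::complex_hilbert) = Re a * inner x x"
  by (subst scaleC_decomp) (simp add: inner_add_left inner_i_self)

lemma aux_fx: "(x - e *\<^sub>R (a - y)) - (z - e *\<^sub>R (b - y)) = (x - z) - e *\<^sub>R (a - b::'a::real_vector)"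
  by (simp add: algebra_simps)

lemma aux_fx2: "x - e *\<^sub>R (a - y) = x \<Longrightarrow> e *\<^sub>R (a - y) = (0::'a::real_vector)"
  by simp

lemma coercive_bij:
  fixes F :: "'a::{real_inner, complete_space} \<Rightarrow> 'a"
  assumes F: "bounded_linear F" and k: "k > 0" and co: "\<And>x. k * inner x x \<le> inner (F x) x"
  shows "bij F"
proof (rule bijI)
  interpret F: bounded_linear F by (rule F)
  show "inj F"
  proof (rule injI)
    fix x y assume "F x = F y"
    then have "F (x - y) = 0" by (simp add: F.diff)
    with co[of "x - y"] k have "inner (x - y) (x - y) \<le> 0"
      by (simp add: mult_le_0_iff)
    then show "x = y" by (metis eq_iff_diff_eq_0 inner_ge_zero inner_eq_zero_iff order_antisym)
  qed
  obtain M where M: "M > 0" "\<And>x. norm (F x) \<le> norm x * M" using F.pos_bounded by blast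
  define e where "e = k / M^2"
  define q2 where "q2 = 1 - e * k"
  define q where "q = sqrt (max 0 q2)"
  have e0: "e > 0" using k M by (simp add: e_def)
  have q2: "q2 < 1" using k e0 by (simp add: q2_def)
  have q0: "0 \<le> q" and q1: "q < 1" using q2 by (auto simp: q_def)
  have contr: "norm (z - e *\<^sub>R F z) \<le> q * norm z" for z
  proof -
    have "(norm (z - e *\<^sub>R F z))^2 = inner z z - 2 * e * inner (F z) z + e^2 * inner (F z) (F z)"
      unfolding power2_norm_eq_inner
      by (simp add: inner_diff_left inner_diff_right inner_commute[of z "F z"] power2_eq_square algebra_simps)
    also have "\<dots> = (norm z)^2 - 2 * e * inner (F z) z + e^2 * (norm (F z))^2"
      by (simp add: power2_norm_eq_inner)
    also have "\<dots> \<le> (norm z)^2 - 2 * e * (k * (norm z)^2) + e^2 * (M * norm z)^2"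
    proof -
      have "k * (norm z)^2 \<le> inner (F z) z" using co[of z] by (simp add: power2_norm_eq_inner)
      then have a: "2 * e * (k * (norm z)^2) \<le> 2 * e * inner (F z) z" using e0 by simp
      have "(norm (F z))^2 \<le> (M * norm z)^2" using M(2)[of z]
        by (simp add: mult.commute power_mono)
      then have b: "e^2 * (norm (F z))^2 \<le> e^2 * (M * norm z)^2" by (simp add: mult_left_mono)
      from a b show ?thesis by linarith
    qed
    also have "\<dots> = (1 - 2 * e * k + e^2 * M^2) * (norm z)^2"
      by (simp add: power_mult_distrib algebra_simps)
    also have "\<dots> = q2 * (norm z)^2"
    proof -
      have eM: "e * M^2 = k" using M by (simp add: e_def)
      have "e^2 * M^2 = e * (e * M^2)" by (simp add: power2_eq_square)
      then have "1 - 2 * e * k + e^2 * M^2 = q2" using eM by (simp add: q2_def)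
      then show ?thesis by simp
    qed
    also have "\<dots> \<le> (max 0 q2) * (norm z)^2" by (simp add: mult_right_mono)
    finally have "(norm (z - e *\<^sub>R F z))^2 \<le> (max 0 q2) * (norm z)^2" .
    then have "sqrt ((norm (z - e *\<^sub>R F z))^2) \<le> sqrt ((max 0 q2) * (norm z)^2)"
      by (rule real_sqrt_le_mono)
    then show ?thesis by (simp add: q_def real_sqrt_mult)
  qed
  show "surj F"
  unfolding surj_def proof
    fix y
    define f where "f x = x - e *\<^sub>R (F x - y)" for x
    have "\<forall>x z. dist (f x) (f z) \<le> q * dist x z"
    proof (intro allI)
      fix x z
      have "f x - f z = (x - z) - e *\<^sub>R (F x - F z)"
        unfolding f_def by (rule aux_fx)
      also have "\<dots> = (x - z) - e *\<^sub>R F (x - z)" by (simp add: F.diff)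
      finally have fe: "f x - f z = (x - z) - e *\<^sub>R F (x - z)" .
      have "dist (f x) (f z) = norm ((x - z) - e *\<^sub>R F (x - z))"
        unfolding dist_norm fe ..
      also have "\<dots> \<le> q * norm (x - z)" by (rule contr)
      also have "\<dots> = q * dist x z" by (simp only: dist_norm)
      finally show "dist (f x) (f z) \<le> q * dist x z" .
    qed
    then have "\<exists>x. f x = x" by (rule banach_fix_type[OF q0 q1, THEN ex1_implies_ex])
    then obtain x where "f x = x" by blast
    then have "e *\<^sub>R (F x - y) = 0" unfolding f_def by (rule aux_fx2)
    with e0 have "F x = y" by simp
    then show "\<exists>x. y = F x" by auto
  qed
qed

lemma bl_diff: assumes "bounded_linear f" shows "f (x - y) = f x - f y"
proof - interpret bounded_linear f by fact show ?thesis by (rule diff) qed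
lemma bl_add: assumes "bounded_linear f" shows "f (x + y) = f x + f y"
proof - interpret bounded_linear f by fact show ?thesis by (rule add) qed
lemma bl_zero: assumes "bounded_linear f" shows "f 0 = 0"
proof - interpret bounded_linear f by fact show ?thesis by (rule zero) qed
lemma bl_scaleR: assumes "bounded_linear f" shows "f (r *\<^sub>R x) = r *\<^sub>R f x"
proof - interpret bounded_linear f by fact show ?thesis by (rule scaleR) qed
lemma bl_minus: assumes "bounded_linear f" shows "f (- x) = - f x"
proof - interpret bounded_linear f by fact show ?thesis by (rule neg) qed
lemma bl_sum: assumes "bounded_linear f" shows "f (sum g A) = (\<Sum>i\<in>A. f (g i))"
proof - interpret bounded_linear f by fact show ?thesis by (rule sum) qed

locale sg =
  fixes T :: "real \<Rightarrow> 'x::complex_hilbert \<Rightarrow> 'x"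
  assumes sg: "c0_semigroup T"
begin

lemma bcl: "t \<ge> 0 \<Longrightarrow> bounded_clinear (T t)"
  using sg unfolding c0_semigroup_def by blast

lemma bl: "t \<ge> 0 \<Longrightarrow> bounded_linear (T t)"
  using bcl bounded_clinear_def by blast

lemma T0[simp]: "T 0 x = x"
  using sg unfolding c0_semigroup_def by simp

lemma Tadd: "s \<ge> 0 \<Longrightarrow> t \<ge> 0 \<Longrightarrow> T (s + t) x = T s (T t x)"
  using sg unfolding c0_semigroup_def by (metis comp_apply)

lemma Tlim: "((\<lambda>t. T t x) \<longlongrightarrow> x) (at_right 0)"
  using sg unfolding c0_semigroup_def by blast

lemma T_diff: "t \<ge> 0 \<Longrightarrow> T t (x - y) = T t x - T t y"
  using bl bl_diff by blast

lemma T_add: "t \<ge> 0 \<Longrightarrow> T t (x + y) = T t x + T t y"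
  using bl bl_add by blast

lemma T_zero: "t \<ge> 0 \<Longrightarrow> T t 0 = 0"
  using bl bl_zero by blast

lemma T_scaleR: "t \<ge> 0 \<Longrightarrow> T t (r *\<^sub>R x) = r *\<^sub>R T t x"
  using bl bl_scaleR by blast

lemma T_scaleC: "t \<ge> 0 \<Longrightarrow> T t (a *\<^sub>C x) = a *\<^sub>C T t x"
  using bcl unfolding bounded_clinear_def by blast

lemma Tcont_lin: "t \<ge> 0 \<Longrightarrow> continuous_on UNIV (T t)"
  using bl linear_continuous_on by blast

lemma pointwise_local: "\<exists>d>0. \<exists>m. \<forall>t\<in>{0..d}. norm (T t x) \<le> m"
proof -
  have "eventually (\<lambda>t. dist (T t x) x < 1) (at_right 0)"
    using Tlim by (rule tendstoD) simp
  then obtain b where b: "b > 0" "\<And>t. t > 0 \<Longrightarrow> t < b \<Longrightarrow> dist (T t x) x < 1"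
    by (auto simp: eventually_at_right_field)
  have "norm (T t x) \<le> norm x + 1" if "t \<in> {0..b/2}" for t
  proof (cases "t = 0")
    case True then show ?thesis by simp
  next
    case False
    with that b have "dist (T t x) x < 1" by auto
    moreover have "norm (T t x) \<le> norm x + dist (T t x) x"
      by (metis add.commute dist_commute dist_norm norm_triangle_sub)
    ultimately show ?thesis by linarith
  qed
  moreover have "b / 2 > 0" using b by simp
  ultimately show ?thesis by blast
qed

lemma local_bound: "\<exists>d>0. \<exists>M. \<forall>t\<in>{0..d}. \<forall>x. norm (T t x) \<le> M * norm x"
proof -
  define E where "E n = {x. \<forall>t\<in>{0..1 / real (Suc n)}. norm (T t x) \<le> real n}" for n
  have clo: "closed (E n)" for n
  proof -
    have "E n = (\<Inter>t\<in>{0..1 / real (Suc n)}. {x. norm (T t x) \<le> real n})"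
      by (auto simp: E_def)
    moreover have "closed {x. norm (T t x) \<le> real n}" if "t \<in> {0..1 / real (Suc n)}" for t
    proof -
      have "continuous_on UNIV (\<lambda>x. norm (T t x))"
        using Tcont_lin[of t] that by (auto intro: continuous_on_norm)
      then show ?thesis
        using closed_Collect_le[of "\<lambda>x. norm (T t x)" "\<lambda>x. real n"] by auto
    qed
    ultimately show ?thesis by (simp add: closed_INT)
  qed
  have cover: "\<Union>(range E) = UNIV"
  proof (intro set_eqI iffI)
    fix x :: 'x
    obtain d m where dm: "d > 0" "\<forall>t\<in>{0..d}. norm (T t x) \<le> m"
      using pointwise_local by blast
    obtain n :: nat where n: "max m (1 / d) \<le> real n" using real_arch_simple by blast
    have "1 / real (Suc n) \<le> d"
    proof -
      have "1 / d \<le> real (Suc n)" using n by simp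
      then show ?thesis using dm(1) by (simp add: field_simps)
    qed
    have "\<forall>t\<in>{0..1 / real (Suc n)}. norm (T t x) \<le> real n"
    proof
      fix t assume "t \<in> {0..1 / real (Suc n)}"
      then have "t \<in> {0..d}" using \<open>1 / real (Suc n) \<le> d\<close> by simp
      then have "norm (T t x) \<le> m" using dm by blast
      then show "norm (T t x) \<le> real n" using n by linarith
    qed
    then have "x \<in> E n" by (simp add: E_def)
    then show "x \<in> \<Union>(range E)" by blast
  qed simp
  have "\<exists>n. interior (E n) \<noteq> {}"
  proof (rule ccontr)
    assume na: "\<not> ?thesis"
    have "euclidean interior_of \<Union>(range E) = {}"
    proof (rule Baire_category_alt)
      show "completely_metrizable_space (euclidean::'x topology) \<or> locally_compact_space (euclidean::'x topology) \<and> regular_space (euclidean::'x topology)"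
        using completely_metrizable_space_euclidean by blast
      show "countable (range E)" by simp
      fix G assume "G \<in> range E"
      then obtain n where G: "G = E n" by blast
      have "closedin euclidean G" using clo[of n] G closed_closedin by blast
      moreover have "euclidean interior_of G = {}" using na G by simp
      ultimately show "closedin euclidean G \<and> euclidean interior_of G = {}" by blast
    qed
    then show False using cover by simp
  qed
  then obtain n x0 where "x0 \<in> interior (E n)" by blast
  then obtain r where r: "r > 0" "ball x0 r \<subseteq> E n" by (meson mem_interior)
  have small: "norm (T t y) \<le> 2 * real n" if t: "t \<in> {0..1 / real (Suc n)}" and y: "norm y < r" for t y
  proof -
    have "x0 + y \<in> E n" "x0 \<in> E n" using r y by (auto simp: dist_norm)
    then have "norm (T t (x0 + y)) \<le> real n" "norm (T t x0) \<le> real n"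
      using t by (auto simp: E_def)
    moreover have "T t y = T t (x0 + y) - T t x0" using t by (simp add: T_add)
    ultimately show ?thesis by (metis norm_triangle_ineq4 order_trans add_mono mult_2)
  qed
  have "norm (T t x) \<le> (4 * real n / r) * norm x" if t: "t \<in> {0..1 / real (Suc n)}" for t x
  proof (cases "x = 0")
    case True then show ?thesis using t by (simp add: T_zero)
  next
    case False
    define c where "c = r / (2 * norm x)"
    have c0: "c > 0" using False r by (simp add: c_def)
    have "norm (c *\<^sub>R x) = r / 2" using False r by (simp add: c_def)
    then have "norm (T t (c *\<^sub>R x)) \<le> 2 * real n" using r by (intro small t) simp
    then have "c * norm (T t x) \<le> 2 * real n" using t c0 by (simp add: T_scaleR)
    then have "norm (T t x) \<le> 2 * real n / c" using c0 by (simp add: field_simps)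
    also have "2 * real n / c = (4 * real n / r) * norm x" using False r by (simp add: c_def field_simps)
    finally show ?thesis .
  qed
  moreover have "1 / real (Suc n) > 0" by simp
  ultimately show ?thesis by blast
qed

lemma bound: "\<exists>K\<ge>1. \<forall>t\<in>{0..\<tau>}. \<forall>x. norm (T t x) \<le> K * norm x"
proof -
  obtain d M where dM: "d > 0" "\<forall>t\<in>{0..d}. \<forall>x. norm (T t x) \<le> M * norm x"
    using local_bound by blast
  define M1 where "M1 = max 1 M"
  have M1a: "M1 \<ge> 1" by (simp add: M1_def)
  have M1b: "norm (T t x) \<le> M1 * norm x" if "t \<in> {0..d}" for t x
  proof -
    have "norm (T t x) \<le> M * norm x" using dM(2) that by blast
    also have "\<dots> \<le> M1 * norm x" unfolding M1_def by (intro mult_right_mono) auto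
    finally show ?thesis .
  qed
  have pw: "M1 \<le> M1 ^ Suc k" for k
  proof -
    have "M1 ^ 1 \<le> M1 ^ Suc k" by (rule power_increasing) (use M1a in auto)
    then show ?thesis by simp
  qed
  have ind: "\<forall>t\<in>{0..real n * d}. \<forall>x. norm (T t x) \<le> M1 ^ Suc n * norm x" for n
  proof (induction n)
    case 0
    show ?case
    proof (intro ballI allI)
      fix t x assume "t \<in> {0..real 0 * d}"
      then have "t = 0" by simp
      then have "norm (T t x) = 1 * norm x" by simp
      also have "\<dots> \<le> M1 ^ Suc 0 * norm x" using M1a by (intro mult_right_mono) auto
      finally show "norm (T t x) \<le> M1 ^ Suc 0 * norm x" .
    qed
  next
    case (Suc n)
    show ?case
    proof (intro ballI allI)
      fix t x assume t: "t \<in> {0..real (Suc n) * d}"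
      show "norm (T t x) \<le> M1 ^ Suc (Suc n) * norm x"
      proof (cases "t \<le> d")
        case True
        then have "norm (T t x) \<le> M1 * norm x" using M1b t by simp
        also have "\<dots> \<le> M1 ^ Suc (Suc n) * norm x"
          using pw[of "Suc n"] by (intro mult_right_mono) auto
        finally show ?thesis .
      next
        case False
        have "t \<le> real n * d + d" using t by (simp add: distrib_right)
        then have tt: "t - d \<in> {0..real n * d}" using False by simp
        have "T t x = T d (T (t - d) x)" using Tadd[of d "t - d" x] dM(1) False by simp
        then have "norm (T t x) \<le> M1 * norm (T (t - d) x)" using M1b[of d] dM(1) by simp
        also have "\<dots> \<le> M1 * (M1 ^ Suc n * norm x)"
          using Suc.IH tt M1a by (intro mult_left_mono) auto
        finally show ?thesis by simp
      qed
    qed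
  qed
  obtain n :: nat where n: "\<tau> / d \<le> real n" using real_arch_simple by blast
  then have "\<tau> \<le> real n * d" using dM(1) by (simp add: field_simps)
  then have "\<forall>t\<in>{0..\<tau>}. \<forall>x. norm (T t x) \<le> M1 ^ Suc n * norm x" using ind[of n] by auto
  moreover have "M1 ^ Suc n \<ge> 1" using M1a by (rule one_le_power)
  ultimately show ?thesis by blast
qed

lemma diff_bound:
  assumes K: "\<forall>t\<in>{0..\<tau>}. \<forall>x. norm (T t x) \<le> K * norm x"
    and ab: "0 \<le> a" "a \<le> b" "b \<le> \<tau>"
  shows "norm (T b x - T a x) \<le> K * norm (T (b - a) x - x)"
proof -
  have "T b x = T a (T (b - a) x)" using Tadd[of a "b - a" x] ab by simp
  then have "T b x - T a x = T a (T (b - a) x - x)" using ab by (simp add: T_diff)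
  then show ?thesis using K ab by auto
qed

lemma Tcont: "continuous_on {0..} (\<lambda>t. T t x)"
  unfolding continuous_on_iff
proof (intro ballI allI impI)
  fix t0 :: real and e :: real
  assume t0: "t0 \<in> {0..}" and e: "e > 0"
  obtain K where K: "K \<ge> 1" "\<forall>t\<in>{0..t0+1}. \<forall>x. norm (T t x) \<le> K * norm x"
    using bound by blast
  have "eventually (\<lambda>t. dist (T t x) x < e / K) (at_right 0)"
    using Tlim by (rule tendstoD) (use e K in simp)
  then obtain b where b: "b > 0" "\<And>h. h > 0 \<Longrightarrow> h < b \<Longrightarrow> dist (T h x) x < e / K"
    by (auto simp: eventually_at_right_field)
  have hb: "K * norm (T h x - x) < e" if "0 \<le> h" "h < b" for h
  proof (cases "h = 0")
    case True then show ?thesis using e by simp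
  next
    case False
    then have "norm (T h x - x) < e / K" using b that by (simp add: dist_norm)
    then show ?thesis using K(1) by (simp add: field_simps)
  qed
  show "\<exists>d>0. \<forall>t\<in>{0..}. dist t t0 < d \<longrightarrow> dist (T t x) (T t0 x) < e"
  proof (intro exI[of _ "min 1 b"] conjI ballI impI)
    show "min 1 b > 0" using b by simp
    fix t :: real assume t: "t \<in> {0..}" and d: "dist t t0 < min 1 b"
    show "dist (T t x) (T t0 x) < e"
    proof (cases "t0 \<le> t")
      case True
      have "norm (T t x - T t0 x) \<le> K * norm (T (t - t0) x - x)"
        using diff_bound[OF K(2)] True t0 d by (auto simp: dist_real_def)
      also have "\<dots> < e" using hb[of "t - t0"] True d by (auto simp: dist_real_def)
      finally show ?thesis by (simp add: dist_norm)
    next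
      case False
      have "norm (T t0 x - T t x) \<le> K * norm (T (t0 - t) x - x)"
        using diff_bound[OF K(2)] False t0 t d by (auto simp: dist_real_def)
      also have "\<dots> < e" using hb[of "t0 - t"] False d by (auto simp: dist_real_def)
      finally show ?thesis by (simp add: dist_norm norm_minus_commute)
    qed
  qed
qed

lemma joint:
  assumes v: "continuous_on {0..\<tau>} v"
  shows "continuous_on ({0..\<tau>} \<times> {0..\<tau>}) (\<lambda>p. T (fst p) (v (snd p)))"
  unfolding continuous_on_iff
proof (intro ballI allI impI)
  fix p0 :: "real \<times> real" and e :: real
  assume p0: "p0 \<in> {0..\<tau>} \<times> {0..\<tau>}" and e: "e > 0"
  obtain h0 s0 where hs0: "p0 = (h0, s0)" by (cases p0)
  obtain K where K: "K \<ge> 1" "\<forall>t\<in>{0..\<tau>}. \<forall>x. norm (T t x) \<le> K * norm x"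
    using bound by blast
  have h0: "h0 \<in> {0..\<tau>}" and s0: "s0 \<in> {0..\<tau>}" using p0 hs0 by auto
  have h0': "h0 \<in> {0..}" using h0 by simp
  have e2: "e / 2 > 0" using e by simp
  obtain d1 where d1: "d1 > 0" "\<forall>h\<in>{0..}. dist h h0 < d1 \<longrightarrow> dist (T h (v s0)) (T h0 (v s0)) < e / 2"
    using Tcont[of "v s0", unfolded continuous_on_iff, rule_format, OF h0' e2] by blast
  have e2K: "e / (2 * K) > 0" using e K(1) by simp
  obtain d2 where d2: "d2 > 0" "\<forall>s\<in>{0..\<tau>}. dist s s0 < d2 \<longrightarrow> dist (v s) (v s0) < e / (2 * K)"
    using v[unfolded continuous_on_iff, rule_format, OF s0 e2K] by blast
  show "\<exists>d>0. \<forall>p\<in>{0..\<tau>} \<times> {0..\<tau>}. dist p p0 < d \<longrightarrow> dist (T (fst p) (v (snd p))) (T (fst p0) (v (snd p0))) < e"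
  proof (intro exI[of _ "min d1 d2"] conjI ballI impI)
    show "min d1 d2 > 0" using d1 d2 by simp
    fix p assume p: "p \<in> {0..\<tau>} \<times> {0..\<tau>}" and dp: "dist p p0 < min d1 d2"
    obtain h s where hs: "p = (h, s)" by (cases p)
    have h: "h \<in> {0..\<tau>}" and s: "s \<in> {0..\<tau>}" using p hs by auto
    have "dist h h0 \<le> dist p p0" "dist s s0 \<le> dist p p0"
      using hs hs0 by (auto simp: dist_Pair_Pair real_sqrt_sum_squares_ge1 real_sqrt_sum_squares_ge2)
    then have dh: "dist h h0 < d1" and ds: "dist s s0 < d2" using dp by auto
    have "T h (v s) - T h0 (v s0) = T h (v s - v s0) + (T h (v s0) - T h0 (v s0))"
      using h by (simp add: T_diff)
    then have "norm (T h (v s) - T h0 (v s0)) \<le> norm (T h (v s - v s0)) + norm (T h (v s0) - T h0 (v s0))"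
      by (metis norm_triangle_ineq)
    also have "norm (T h (v s - v s0)) \<le> K * norm (v s - v s0)" using K h by auto
    also have "K * norm (v s - v s0) < e / 2"
    proof -
      have "norm (v s - v s0) < e / (2 * K)" using d2(2) s ds by (simp add: dist_norm)
      then have "K * norm (v s - v s0) < K * (e / (2 * K))" using K(1) by (intro mult_strict_left_mono) auto
      also have "\<dots> = e / 2" using K(1) by (simp add: field_simps)
      finally show ?thesis .
    qed
    also have "norm (T h (v s0) - T h0 (v s0)) < e / 2"
      using d1(2) h dh by (simp add: dist_norm)
    finally show "dist (T (fst p) (v (snd p))) (T (fst p0) (v (snd p0))) < e"
      using hs hs0 by (simp add: dist_norm)
  qed
qed

end

instance complex_hilbert \<subseteq> banach ..

locale pert = sg T for T :: "real \<Rightarrow> 'x::complex_hilbert \<Rightarrow> 'x" +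
  fixes P :: "'x \<Rightarrow> 'x"
  assumes P: "bounded_clinear P"
begin

lemma Pbl: "bounded_linear P" using P bounded_clinear_def by blast
lemma P_diff: "P (x - y) = P x - P y" by (rule bl_diff[OF Pbl])
lemma P_add: "P (x + y) = P x + P y" by (rule bl_add[OF Pbl])
lemma P_zero: "P 0 = 0" by (rule bl_zero[OF Pbl])
lemma P_scaleC: "P (a *\<^sub>C x) = a *\<^sub>C P x" using P unfolding bounded_clinear_def by blast
lemma Pnorm: "norm (P x) \<le> onorm P * norm x" by (rule onorm[OF Pbl])
lemma Pnn: "0 \<le> onorm P" by (rule onorm_pos_le[OF Pbl])

definition conv :: "(real \<Rightarrow> 'x) \<Rightarrow> real \<Rightarrow> 'x" where
  "conv g t = integral {0..t} (\<lambda>s. T (t - s) (P (g s)))"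

lemma Pg_cont:
  assumes g: "continuous_on {0..} g"
  shows "continuous_on {0..\<tau>} (\<lambda>s. P (g s))"
proof -
  have "continuous_on {0..\<tau>} g" using g by (rule continuous_on_subset) auto
  from continuous_on_compose2[OF linear_continuous_on[OF Pbl, of UNIV] this]
  show ?thesis by simp
qed

lemma integrand_cont:
  assumes g: "continuous_on {0..} g" and t: "0 \<le> t"
  shows "continuous_on {0..t} (\<lambda>s. T (t - s) (P (g s)))"
proof -
  have J: "continuous_on ({0..t} \<times> {0..t}) (\<lambda>p. T (fst p) (P (g (snd p))))"
    using joint[OF Pg_cont[OF g, of t]] by simp
  have c: "continuous_on {0..t} (\<lambda>s. (t - s, s))" by (intro continuous_intros)
  have "(\<lambda>s. (t - s, s)) ` {0..t} \<subseteq> {0..t} \<times> {0..t}" by auto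
  from continuous_on_compose2[OF J c this] show ?thesis by simp
qed

lemma integrand_int:
  assumes g: "continuous_on {0..} g" and t: "0 \<le> t"
  shows "(\<lambda>s. T (t - s) (P (g s))) integrable_on {0..t}"
  by (rule integrable_continuous_real[OF integrand_cont[OF g t]])

lemma poly_integral:
  assumes t: "0 \<le> t"
  shows "((\<lambda>s. C * (real (Suc n) * s ^ n)) has_integral C * t ^ Suc n) {0..t}"
proof -
  have "((\<lambda>s. C * s ^ Suc n) has_vector_derivative C * (real (Suc n) * x ^ n)) (at x within {0..t})" for x
  proof -
    have "((\<lambda>s. s ^ Suc n) has_real_derivative real (Suc n) * x ^ n) (at x within {0..t})"
      using DERIV_pow[of "Suc n" x "{0..t}"] by simp
    then have "((\<lambda>s. C * s ^ Suc n) has_real_derivative C * (real (Suc n) * x ^ n)) (at x within {0..t})"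
      by (rule DERIV_cmult)
    then show ?thesis by (simp add: has_real_derivative_iff_has_vector_derivative)
  qed
  from fundamental_theorem_of_calculus[OF t this]
  show ?thesis using t by simp
qed

lemma conv_bound_poly:
  assumes g: "continuous_on {0..} g" and t: "0 \<le> t"
    and K: "\<forall>s\<in>{0..t}. \<forall>x. norm (T s x) \<le> K * norm x" and K0: "0 \<le> K"
    and gb: "\<forall>s\<in>{0..t}. norm (g s) \<le> c * s ^ n / fact n"
  shows "norm (conv g t) \<le> K * onorm P * c * t ^ Suc n / fact (Suc n)"
proof -
  define C where "C = K * onorm P * c / fact (Suc n)"
  have fs: "(fact (Suc n)::real) = real (Suc n) * fact n" by (simp only: fact_Suc)
  have f1: "real (Suc n) / fact (Suc n) = 1 / (fact n :: real)"
  proof -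
    have fn: "(fact n::real) > 0" by simp
    have nz: "(fact n::real) + fact n * real n > 0" using fn by (simp add: add_pos_nonneg)
    show ?thesis unfolding fs using nz by (simp add: field_simps)
  qed
  have "C * real (Suc n) = K * onorm P * c * (real (Suc n) / fact (Suc n))" by (simp add: C_def)
  then have CS: "C * real (Suc n) = K * onorm P * c / fact n" unfolding f1 by simp
  have phi: "C * (real (Suc n) * s ^ n) = K * (onorm P * (c * s ^ n / fact n))" for s
  proof -
    have "C * (real (Suc n) * s ^ n) = (C * real (Suc n)) * s ^ n" by simp
    also have "\<dots> = K * (onorm P * (c * s ^ n / fact n))" unfolding CS by simp
    finally show ?thesis .
  qed
  have I: "((\<lambda>s. C * (real (Suc n) * s ^ n)) has_integral C * t ^ Suc n) {0..t}"
    by (rule poly_integral[OF t])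
  have "norm (conv g t) \<le> integral {0..t} (\<lambda>s. C * (real (Suc n) * s ^ n))"
    unfolding conv_def
  proof (rule integral_norm_bound_integral[OF integrand_int[OF g t]])
    show "(\<lambda>s. C * (real (Suc n) * s ^ n)) integrable_on {0..t}" using I by blast
    fix s assume s: "s \<in> {0..t}"
    have ts: "t - s \<in> {0..t}" using s by simp
    have "norm (T (t - s) (P (g s))) \<le> K * norm (P (g s))" using K ts by blast
    also have "\<dots> \<le> K * (onorm P * norm (g s))" by (rule mult_left_mono[OF Pnorm K0])
    also have "\<dots> \<le> K * (onorm P * (c * s ^ n / fact n))"
      using gb s K0 Pnn by (intro mult_left_mono) auto
    finally show "norm (T (t - s) (P (g s))) \<le> C * (real (Suc n) * s ^ n)" unfolding phi .
  qed
  also have "\<dots> = C * t ^ Suc n" using I by (rule integral_unique)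
  also have "\<dots> = K * onorm P * c * t ^ Suc n / fact (Suc n)" by (simp add: C_def)
  finally show ?thesis .
qed

lemma conv_add:
  assumes g1: "continuous_on {0..} g1" and g2: "continuous_on {0..} g2" and t: "0 \<le> t"
  shows "conv (\<lambda>s. g1 s + g2 s) t = conv g1 t + conv g2 t"
proof -
  have "conv (\<lambda>s. g1 s + g2 s) t = integral {0..t} (\<lambda>s. T (t - s) (P (g1 s)) + T (t - s) (P (g2 s)))"
    unfolding conv_def by (rule integral_cong) (simp add: P_add T_add)
  also have "\<dots> = conv g1 t + conv g2 t"
    unfolding conv_def by (rule integral_add[OF integrand_int[OF g1 t] integrand_int[OF g2 t]])
  finally show ?thesis .
qed

lemma conv_diff:
  assumes g1: "continuous_on {0..} g1" and g2: "continuous_on {0..} g2" and t: "0 \<le> t"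
  shows "conv (\<lambda>s. g1 s - g2 s) t = conv g1 t - conv g2 t"
proof -
  have "conv (\<lambda>s. g1 s - g2 s) t = integral {0..t} (\<lambda>s. T (t - s) (P (g1 s)) - T (t - s) (P (g2 s)))"
    unfolding conv_def by (rule integral_cong) (simp add: P_diff T_diff)
  also have "\<dots> = conv g1 t - conv g2 t"
    unfolding conv_def by (rule integral_diff[OF integrand_int[OF g1 t] integrand_int[OF g2 t]])
  finally show ?thesis .
qed

lemma conv_scaleC:
  assumes g: "continuous_on {0..} g" and t: "0 \<le> t"
  shows "conv (\<lambda>s. a *\<^sub>C g s) t = a *\<^sub>C conv g t"
proof -
  have "conv (\<lambda>s. a *\<^sub>C g s) t = integral {0..t} ((\<lambda>x. a *\<^sub>C x) \<circ> (\<lambda>s. T (t - s) (P (g s))))"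
    unfolding conv_def by (rule integral_cong) (simp add: P_scaleC T_scaleC)
  also have "\<dots> = a *\<^sub>C conv g t"
    unfolding conv_def by (rule integral_linear[OF integrand_int[OF g t] scaleC_bl])
  finally show ?thesis .
qed

lemma conv_zero: "conv (\<lambda>s. 0) t = 0"
proof -
  have "conv (\<lambda>s. 0) t = integral {0..t} (\<lambda>s. 0::'x)"
    unfolding conv_def by (rule integral_cong) (simp add: P_zero T_zero)
  then show ?thesis by simp
qed

lemma conv_sum:
  fixes f :: "nat \<Rightarrow> real \<Rightarrow> 'x"
  assumes f: "\<And>i. continuous_on {0..} (f i)" and t: "0 \<le> t"
  shows "conv (\<lambda>s. \<Sum>i<N. f i s) t = (\<Sum>i<N. conv (f i) t)"
proof (induction N)
  case 0 then show ?case by (simp add: conv_zero)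
next
  case (Suc N)
  have c: "continuous_on {0..} (\<lambda>s. \<Sum>i<N. f i s)" by (intro continuous_on_sum f)
  have "conv (\<lambda>s. \<Sum>i<Suc N. f i s) t = conv (\<lambda>s. (\<Sum>i<N. f i s) + f N s) t" by simp
  also have "\<dots> = conv (\<lambda>s. \<Sum>i<N. f i s) t + conv (f N) t" by (rule conv_add[OF c f t])
  finally show ?case using Suc.IH by simp
qed

end

context pert begin

lemma conv_cont:
  assumes g: "continuous_on {0..} g"
  shows "continuous_on {0..} (conv g)"
  unfolding continuous_on_iff
proof (intro ballI allI impI)
  fix t0 e :: real assume t0: "t0 \<in> {0..}" and e: "e > 0"
  define \<tau> where "\<tau> = t0 + 1"
  have tau: "\<tau> \<ge> 1" using t0 by (simp add: \<tau>_def)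
  define S where "S = {0..\<tau>} \<times> {0..\<tau>}"
  define H where "H p = T (fst p) (P (g (snd p)))" for p
  have Hc: "continuous_on S H"
    unfolding H_def S_def using joint[OF Pg_cont[OF g, of \<tau>]] by simp
  have cpt: "compact S" unfolding S_def by (intro compact_Times compact_Icc)
  have uc: "uniformly_continuous_on S H" by (rule compact_uniformly_continuous[OF Hc cpt])
  have "bounded (H ` S)" by (rule compact_imp_bounded[OF compact_continuous_image[OF Hc cpt]])
  then obtain B where B0: "B > 0" and B1: "\<forall>x\<in>H ` S. norm x \<le> B" unfolding bounded_pos by blast
  have B: "norm (H p) \<le> B" if "p \<in> S" for p using B1 that by blast
  define e1 where "e1 = e / (2 * (\<tau> + 1))"
  have e1: "e1 > 0" using e tau by (simp add: e1_def)
  obtain d1 where d1: "d1 > 0" "\<forall>p\<in>S. \<forall>p'\<in>S. dist p' p < d1 \<longrightarrow> dist (H p') (H p) < e1"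
    using uc[unfolded uniformly_continuous_on_def, rule_format, OF e1] by blast
  define \<delta> where "\<delta> = min 1 (min d1 (e / (2 * B)))"
  have \<delta>0: "\<delta> > 0" using d1 e B0 by (simp add: \<delta>_def)
  have key: "norm (conv g b - conv g a) < e" if ab: "0 \<le> a" "a \<le> b" "b \<le> \<tau>" "b - a < \<delta>" for a b
  proof -
    define Ib where "Ib s = T (b - s) (P (g s))" for s
    define Ia where "Ia s = T (a - s) (P (g s))" for s
    have cb: "continuous_on {0..b} Ib" unfolding Ib_def by (rule integrand_cont[OF g]) (use ab in simp)
    have ca: "continuous_on {0..a} Ia" unfolding Ia_def by (rule integrand_cont[OF g ab(1)])
    have cb1: "continuous_on {0..a} Ib" using cb by (rule continuous_on_subset) (use ab in auto)
    have cb2: "continuous_on {a..b} Ib" using cb by (rule continuous_on_subset) (use ab in auto)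
    have ib: "Ib integrable_on {0..b}" by (rule integrable_continuous_real[OF cb])
    have ia: "Ia integrable_on {0..a}" by (rule integrable_continuous_real[OF ca])
    have ib1: "Ib integrable_on {0..a}" by (rule integrable_continuous_real[OF cb1])
    have ib2: "Ib integrable_on {a..b}" by (rule integrable_continuous_real[OF cb2])
    have split: "integral {0..a} Ib + integral {a..b} Ib = integral {0..b} Ib"
      by (rule Henstock_Kurzweil_Integration.integral_combine[OF ab(1) ab(2) ib])
    have cg: "conv g b = integral {0..b} Ib" "conv g a = integral {0..a} Ia"
      unfolding conv_def Ib_def Ia_def by simp_all
    have diff: "conv g b - conv g a = integral {0..a} (\<lambda>s. Ib s - Ia s) + integral {a..b} Ib"
      unfolding cg split[symmetric] integral_diff[OF ib1 ia] by simp
    have n1: "norm (integral {0..a} (\<lambda>s. Ib s - Ia s)) \<le> integral {0..a} (\<lambda>s. e1)"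
    proof (rule integral_norm_bound_integral)
      show "(\<lambda>s. Ib s - Ia s) integrable_on {0..a}" by (rule integrable_diff[OF ib1 ia])
      show "(\<lambda>s. e1) integrable_on {0..a}" by (rule integrable_continuous_real) (rule continuous_on_const)
      fix s assume s: "s \<in> {0..a}"
      have p1: "(b - s, s) \<in> S" and p2: "(a - s, s) \<in> S" using s ab by (auto simp: S_def)
      have "dist (b - s, s) (a - s, s) = dist (b - s) (a - s)" by (simp add: dist_Pair_Pair)
      also have "\<dots> = b - a" using ab by (simp add: dist_real_def)
      also have "\<dots> < d1" using ab(4) by (simp add: \<delta>_def)
      finally have "dist (H (b - s, s)) (H (a - s, s)) < e1" using d1(2) p1 p2 by blast
      then show "norm (Ib s - Ia s) \<le> e1" by (simp add: H_def Ib_def Ia_def dist_norm)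
    qed
    also have "\<dots> = a * e1" using ab by simp
    also have "\<dots> \<le> \<tau> * e1" using ab e1 by (intro mult_right_mono) auto
    also have "\<dots> < e / 2"
    proof -
      have "\<tau> * e1 = e / 2 * (\<tau> / (\<tau> + 1))" using tau by (simp add: e1_def field_simps)
      also have "\<dots> < e / 2 * 1" using tau e by (intro mult_strict_left_mono) auto
      finally show ?thesis by simp
    qed
    finally have n1': "norm (integral {0..a} (\<lambda>s. Ib s - Ia s)) < e / 2" .
    have n2: "norm (integral {a..b} Ib) \<le> integral {a..b} (\<lambda>s. B)"
    proof (rule integral_norm_bound_integral[OF ib2])
      show "(\<lambda>s. B) integrable_on {a..b}" by (rule integrable_continuous_real) (rule continuous_on_const)
      fix s assume s: "s \<in> {a..b}"
      have "(b - s, s) \<in> S" using s ab by (auto simp: S_def)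
      then have "norm (H (b - s, s)) \<le> B" by (rule B)
      then show "norm (Ib s) \<le> B" by (simp add: H_def Ib_def)
    qed
    also have "\<dots> = (b - a) * B" using ab by simp
    also have "\<dots> < (e / (2 * B)) * B"
    proof -
      have "b - a < e / (2 * B)" using ab(4) by (simp add: \<delta>_def)
      then show ?thesis using B0 by (intro mult_strict_right_mono) auto
    qed
    also have "\<dots> = e / 2" using B0 by simp
    finally have n2': "norm (integral {a..b} Ib) < e / 2" .
    have "norm (conv g b - conv g a) \<le> norm (integral {0..a} (\<lambda>s. Ib s - Ia s)) + norm (integral {a..b} Ib)"
      unfolding diff by (rule norm_triangle_ineq)
    then show ?thesis using n1' n2' by linarith
  qed
  show "\<exists>d>0. \<forall>t\<in>{0..}. dist t t0 < d \<longrightarrow> dist (conv g t) (conv g t0) < e"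
  proof (intro exI[of _ \<delta>] conjI ballI impI)
    show "\<delta> > 0" by (rule \<delta>0)
    fix t :: real assume t: "t \<in> {0..}" and dt: "dist t t0 < \<delta>"
    have d1': "\<delta> \<le> 1" by (simp add: \<delta>_def)
    show "dist (conv g t) (conv g t0) < e"
    proof (cases "t \<le> t0")
      case True
      have "norm (conv g t0 - conv g t) < e"
        using key[of t t0] True t t0 dt by (auto simp: \<tau>_def dist_real_def)
      then show ?thesis by (simp add: dist_norm norm_minus_commute)
    next
      case False
      have "norm (conv g t - conv g t0) < e"
        using key[of t0 t] False t t0 dt d1' by (auto simp: \<tau>_def dist_real_def)
      then show ?thesis by (simp add: dist_norm)
    qed
  qed
qed

end

lemma cont_from_local:
  fixes f :: "real \<Rightarrow> 'a::metric_space"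
  assumes "\<And>\<tau>. continuous_on {0..\<tau>} f"
  shows "continuous_on {0..} f"
  unfolding continuous_on_iff
proof (intro ballI allI impI)
  fix t0 e :: real assume t0: "t0 \<in> {0..}" and e: "e > 0"
  have t0': "t0 \<in> {0..t0+1}" using t0 by simp
  obtain d where d: "d > 0" "\<forall>t\<in>{0..t0+1}. dist t t0 < d \<longrightarrow> dist (f t) (f t0) < e"
    using assms[of "t0 + 1", unfolded continuous_on_iff, rule_format, OF t0' e] by blast
  show "\<exists>d>0. \<forall>t\<in>{0..}. dist t t0 < d \<longrightarrow> dist (f t) (f t0) < e"
  proof (intro exI[of _ "min d 1"] conjI ballI impI)
    show "min d 1 > 0" using d by simp
    fix t :: real assume t: "t \<in> {0..}" and dt: "dist t t0 < min d 1"
    then have "t \<in> {0..t0+1}" by (auto simp: dist_real_def)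
    then show "dist (f t) (f t0) < e" using d dt by auto
  qed
qed

lemma exp_summable: "summable (\<lambda>n. (y::real) ^ n / fact n)"
  using summable_exp[of y] by (simp add: divide_inverse mult.commute)

lemma exp_sums: "(\<lambda>n. (y::real) ^ n / fact n) sums exp y"
  using exp_converges[of y] by (simp add: divide_inverse mult.commute)

context pert begin

lemma conv_cong: "(\<And>s. s \<in> {0..t} \<Longrightarrow> g1 s = g2 s) \<Longrightarrow> conv g1 t = conv g2 t"
  unfolding conv_def by (rule integral_cong) simp

fun DP :: "nat \<Rightarrow> real \<Rightarrow> 'x \<Rightarrow> 'x" where
  "DP 0 t x = T t x"
| "DP (Suc n) t x = conv (\<lambda>s. DP n s x) t"

lemma DP_cont: "continuous_on {0..} (\<lambda>t. DP n t x)"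
proof (induction n)
  case 0 then show ?case using Tcont by simp
next
  case (Suc n)
  from conv_cont[OF Suc.IH] show ?case by simp
qed

lemma DP_bound:
  assumes K: "\<forall>s\<in>{0..\<tau>}. \<forall>x. norm (T s x) \<le> K * norm x" and K0: "K \<ge> 0"
    and t: "t \<in> {0..\<tau>}"
  shows "norm (DP n t x) \<le> (K ^ Suc n * onorm P ^ n * norm x) * t ^ n / fact n"
  using t
proof (induction n arbitrary: t)
  case 0 then show ?case using K by simp
next
  case (Suc n)
  have t0: "0 \<le> t" using Suc.prems by simp
  have Kt: "\<forall>s\<in>{0..t}. \<forall>x. norm (T s x) \<le> K * norm x" using K Suc.prems by auto
  have gb: "\<forall>s\<in>{0..t}. norm (DP n s x) \<le> (K ^ Suc n * onorm P ^ n * norm x) * s ^ n / fact n"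
    using Suc.IH Suc.prems by auto
  have "norm (DP (Suc n) t x) \<le> K * onorm P * (K ^ Suc n * onorm P ^ n * norm x) * t ^ Suc n / fact (Suc n)"
    unfolding DP.simps by (rule conv_bound_poly[OF DP_cont t0 Kt K0 gb])
  also have "\<dots> = (K ^ Suc (Suc n) * onorm P ^ Suc n * norm x) * t ^ Suc n / fact (Suc n)"
    by (simp add: mult_ac)
  finally show ?case .
qed

lemma DP_bound':
  assumes K: "\<forall>s\<in>{0..\<tau>}. \<forall>x. norm (T s x) \<le> K * norm x" and K0: "K \<ge> 0"
    and t: "t \<in> {0..\<tau>}"
  shows "norm (DP n t x) \<le> K * norm x * ((K * onorm P * \<tau>) ^ n / fact n)"
proof -
  have "norm (DP n t x) \<le> (K ^ Suc n * onorm P ^ n * norm x) * t ^ n / fact n"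
    by (rule DP_bound[OF K K0 t])
  also have "\<dots> \<le> (K ^ Suc n * onorm P ^ n * norm x) * \<tau> ^ n / fact n"
  proof -
    have "t ^ n \<le> \<tau> ^ n" using t by (intro power_mono) auto
    moreover have "0 \<le> K ^ Suc n * onorm P ^ n * norm x" using K0 Pnn by simp
    ultimately show ?thesis by (intro divide_right_mono mult_left_mono) auto
  qed
  also have "\<dots> = K * norm x * ((K * onorm P * \<tau>) ^ n / fact n)"
    by (simp add: power_mult_distrib mult_ac)
  finally show ?thesis .
qed

definition Sg :: "real \<Rightarrow> 'x \<Rightarrow> 'x" where
  "Sg t x = (\<Sum>n. DP n t x)"

lemma DP_unif:
  assumes K: "\<forall>s\<in>{0..\<tau>}. \<forall>x. norm (T s x) \<le> K * norm x" and K0: "K \<ge> 0"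
  shows "uniform_limit {0..\<tau>} (\<lambda>N t. \<Sum>n<N. DP n t x) (\<lambda>t. Sg t x) sequentially"
  unfolding Sg_def
proof (rule Weierstrass_m_test)
  fix n t assume t: "t \<in> {0..\<tau>}"
  show "norm (DP n t x) \<le> K * norm x * ((K * onorm P * \<tau>) ^ n / fact n)"
    by (rule DP_bound'[OF K K0 t])
next
  show "summable (\<lambda>n. K * norm x * ((K * onorm P * \<tau>) ^ n / fact n))"
    by (intro summable_mult exp_summable)
qed

lemma DP_summable: assumes t: "0 \<le> t" shows "summable (\<lambda>n. DP n t x)"
proof -
  obtain K where K: "K \<ge> 1" "\<forall>s\<in>{0..t}. \<forall>x. norm (T s x) \<le> K * norm x" using bound by blast
  have tt: "t \<in> {0..t}" using t by simp
  show ?thesis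
  proof (rule summable_comparison_test)
    show "\<exists>N. \<forall>n\<ge>N. norm (DP n t x) \<le> K * norm x * ((K * onorm P * t) ^ n / fact n)"
      using DP_bound'[OF K(2) _ tt] K(1) by auto
    show "summable (\<lambda>n. K * norm x * ((K * onorm P * t) ^ n / fact n))"
      by (intro summable_mult exp_summable)
  qed
qed

lemma Sg_cont: "continuous_on {0..} (\<lambda>t. Sg t x)"
proof (rule cont_from_local)
  fix \<tau> :: real
  obtain K where K: "K \<ge> 1" "\<forall>s\<in>{0..\<tau>}. \<forall>x. norm (T s x) \<le> K * norm x" using bound by blast
  have U: "uniform_limit {0..\<tau>} (\<lambda>N t. \<Sum>n<N. DP n t x) (\<lambda>t. Sg t x) sequentially"
    using DP_unif[OF K(2)] K(1) by simp
  have C: "\<forall>\<^sub>F N in sequentially. continuous_on {0..\<tau>} (\<lambda>t. \<Sum>n<N. DP n t x)"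
  proof (rule always_eventually, rule allI)
    fix N
    have "continuous_on {0..\<tau>} (\<lambda>t. DP n t x)" for n
      using DP_cont by (rule continuous_on_subset) auto
    then show "continuous_on {0..\<tau>} (\<lambda>t. \<Sum>n<N. DP n t x)" by (intro continuous_on_sum) auto
  qed
  show "continuous_on {0..\<tau>} (\<lambda>t. Sg t x)"
    by (rule uniform_limit_theorem[OF C U]) simp
qed

lemma Sg_eq: assumes t: "0 \<le> t" shows "Sg t x = T t x + conv (\<lambda>s. Sg s x) t"
proof -
  obtain K where K: "K \<ge> 1" "\<forall>s\<in>{0..t}. \<forall>x. norm (T s x) \<le> K * norm x" using bound by blast
  have K0: "K \<ge> 0" using K by simp
  have U: "uniform_limit {0..t} (\<lambda>N s. \<Sum>n<N. DP n s x) (\<lambda>s. Sg s x) sequentially"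
    using DP_unif[OF K(2) K0] by simp
  have pc: "continuous_on {0..} (\<lambda>s. \<Sum>n<N. DP n s x)" for N
    by (intro continuous_on_sum DP_cont)
  have cs: "conv (\<lambda>s. \<Sum>n<N. DP n s x) t = (\<Sum>n<N. DP (Suc n) t x)" for N
    using conv_sum[of "\<lambda>n s. DP n s x", OF DP_cont t] by simp
  have lim: "(\<lambda>N. conv (\<lambda>s. \<Sum>n<N. DP n s x) t) \<longlonglongrightarrow> conv (\<lambda>s. Sg s x) t"
  proof (rule tendstoI)
    fix e :: real assume e: "e > 0"
    define C where "C = K * onorm P * t"
    have C0: "C \<ge> 0" using K0 Pnn t by (simp add: C_def)
    define e' where "e' = e / (C + 1)"
    have e': "e' > 0" using e C0 by (simp add: e'_def)
    have ev: "\<forall>\<^sub>F N in sequentially. \<forall>s\<in>{0..t}. dist (\<Sum>n<N. DP n s x) (Sg s x) < e'"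
      by (rule uniform_limitD[OF U e'])
    show "\<forall>\<^sub>F N in sequentially. dist (conv (\<lambda>s. \<Sum>n<N. DP n s x) t) (conv (\<lambda>s. Sg s x) t) < e"
      using ev
    proof (rule eventually_mono)
      fix N assume N: "\<forall>s\<in>{0..t}. dist (\<Sum>n<N. DP n s x) (Sg s x) < e'"
      have "conv (\<lambda>s. Sg s x) t - conv (\<lambda>s. \<Sum>n<N. DP n s x) t = conv (\<lambda>s. Sg s x - (\<Sum>n<N. DP n s x)) t"
        by (rule conv_diff[OF Sg_cont pc t, symmetric])
      moreover have "norm (conv (\<lambda>s. Sg s x - (\<Sum>n<N. DP n s x)) t) \<le> K * onorm P * e' * t ^ Suc 0 / fact (Suc 0)"
      proof (rule conv_bound_poly[OF _ t K(2) K0])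
        show "continuous_on {0..} (\<lambda>s. Sg s x - (\<Sum>n<N. DP n s x))"
          by (intro continuous_on_diff Sg_cont pc)
        show "\<forall>s\<in>{0..t}. norm (Sg s x - (\<Sum>n<N. DP n s x)) \<le> e' * s ^ 0 / fact 0"
          using N by (auto simp: dist_norm norm_minus_commute less_imp_le)
      qed
      ultimately have "norm (conv (\<lambda>s. Sg s x) t - conv (\<lambda>s. \<Sum>n<N. DP n s x) t) \<le> C * e'"
        by (simp add: C_def mult_ac)
      also have "C * e' < e"
      proof -
        have "C * e' = e * (C / (C + 1))" using C0 by (simp add: e'_def field_simps)
        also have "\<dots> < e * 1" using C0 e by (intro mult_strict_left_mono) auto
        finally show ?thesis by simp
      qed
      finally show "dist (conv (\<lambda>s. \<Sum>n<N. DP n s x) t) (conv (\<lambda>s. Sg s x) t) < e"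
        by (simp add: dist_norm norm_minus_commute)
    qed
  qed
  then have "(\<lambda>n. DP (Suc n) t x) sums conv (\<lambda>s. Sg s x) t"
    unfolding sums_def cs by simp
  then have "conv (\<lambda>s. Sg s x) t = (\<Sum>n. DP (Suc n) t x)" by (rule sums_unique)
  also have "\<dots> = Sg t x - DP 0 t x"
    unfolding Sg_def by (rule suminf_split_head[OF DP_summable[OF t]])
  finally show ?thesis by simp
qed

end

context pert begin

lemma DP_add: "0 \<le> t \<Longrightarrow> DP n t (x + y) = DP n t x + DP n t y"
proof (induction n arbitrary: t)
  case 0 then show ?case by (simp add: T_add)
next
  case (Suc n)
  have "DP (Suc n) t (x + y) = conv (\<lambda>s. DP n s x + DP n s y) t"
    unfolding DP.simps by (rule conv_cong) (simp add: Suc.IH)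
  also have "\<dots> = DP (Suc n) t x + DP (Suc n) t y"
    unfolding DP.simps by (rule conv_add[OF DP_cont DP_cont Suc.prems])
  finally show ?case .
qed

lemma DP_scaleC: "0 \<le> t \<Longrightarrow> DP n t (a *\<^sub>C x) = a *\<^sub>C DP n t x"
proof (induction n arbitrary: t)
  case 0 then show ?case by (simp add: T_scaleC)
next
  case (Suc n)
  have "DP (Suc n) t (a *\<^sub>C x) = conv (\<lambda>s. a *\<^sub>C DP n s x) t"
    unfolding DP.simps by (rule conv_cong) (simp add: Suc.IH)
  also have "\<dots> = a *\<^sub>C DP (Suc n) t x"
    unfolding DP.simps by (rule conv_scaleC[OF DP_cont Suc.prems])
  finally show ?case .
qed

lemma Sg_add: "0 \<le> t \<Longrightarrow> Sg t (x + y) = Sg t x + Sg t y"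
  unfolding Sg_def by (simp add: DP_add suminf_add[OF DP_summable DP_summable])

lemma Sg_scaleC: "0 \<le> t \<Longrightarrow> Sg t (a *\<^sub>C x) = a *\<^sub>C Sg t x"
  unfolding Sg_def
  by (simp add: DP_scaleC bounded_linear.suminf[OF scaleC_bl DP_summable])

lemma Sg_scaleR: "0 \<le> t \<Longrightarrow> Sg t (r *\<^sub>R x) = r *\<^sub>R Sg t x"
  by (simp add: scaleR_C Sg_scaleC)

lemma Sg_bound: assumes t: "0 \<le> t" shows "\<exists>B. \<forall>x. norm (Sg t x) \<le> norm x * B"
proof -
  obtain K where K: "K \<ge> 1" "\<forall>s\<in>{0..t}. \<forall>x. norm (T s x) \<le> K * norm x" using bound by blast
  have tt: "t \<in> {0..t}" using t by simp
  have "norm (Sg t x) \<le> norm x * (K * exp (K * onorm P * t))" for x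
  proof -
    have "norm (Sg t x) \<le> (\<Sum>n. K * norm x * ((K * onorm P * t) ^ n / fact n))"
      unfolding Sg_def
    proof (rule norm_suminf_le)
      show "norm (DP n t x) \<le> K * norm x * ((K * onorm P * t) ^ n / fact n)" for n
        using DP_bound'[OF K(2) _ tt] K(1) by simp
      show "summable (\<lambda>n. K * norm x * ((K * onorm P * t) ^ n / fact n))"
        by (intro summable_mult exp_summable)
    qed
    also have "\<dots> = K * norm x * exp (K * onorm P * t)"
      using sums_mult[OF exp_sums, of "K * norm x" "K * onorm P * t"] by (rule sums_unique[symmetric])
    finally show ?thesis by (simp add: mult_ac)
  qed
  then show ?thesis by blast
qed

lemma Sg_bcl: assumes t: "0 \<le> t" shows "bounded_clinear (Sg t)"
proof -
  obtain B where B: "\<And>x. norm (Sg t x) \<le> norm x * B" using Sg_bound[OF t] by blast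
  have "bounded_linear (Sg t)"
    by (rule bounded_linear_intro[OF Sg_add[OF t] Sg_scaleR[OF t] B])
  then show ?thesis unfolding bounded_clinear_def using Sg_scaleC[OF t] by blast
qed

lemma DP_at0: "DP n 0 x = (if n = 0 then x else 0)"
  by (cases n) (simp_all add: conv_def)

lemma Sg0: "Sg 0 x = x"
proof -
  have "(\<lambda>n. DP n 0 x) sums x"
    unfolding DP_at0 using sums_single[of 0 "\<lambda>_. x"] by simp
  then show ?thesis unfolding Sg_def by (rule sums_unique[symmetric])
qed

lemma uniq:
  assumes W: "continuous_on {0..} W" and eq: "\<And>t. 0 \<le> t \<Longrightarrow> W t = conv W t"
    and t0: "0 \<le> t0"
  shows "W t0 = 0"
proof -
  obtain K where K: "K \<ge> 1" "\<forall>s\<in>{0..t0}. \<forall>x. norm (T s x) \<le> K * norm x" using bound by blast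
  have K0: "K \<ge> 0" using K by simp
  have Wc: "continuous_on {0..t0} W" using W by (rule continuous_on_subset) auto
  have "bounded (W ` {0..t0})" by (rule compact_imp_bounded[OF compact_continuous_image[OF Wc compact_Icc]])
  then obtain m where m0: "m > 0" and m1: "\<forall>x\<in>W ` {0..t0}. norm x \<le> m" unfolding bounded_pos by blast
  have ind: "\<forall>s\<in>{0..t0}. norm (W s) \<le> (m * (K * onorm P) ^ n) * s ^ n / fact n" for n
  proof (induction n)
    case 0 then show ?case using m1 by simp
  next
    case (Suc n)
    show ?case
    proof
      fix s assume s: "s \<in> {0..t0}"
      have s0: "0 \<le> s" using s by simp
      have Ks: "\<forall>u\<in>{0..s}. \<forall>x. norm (T u x) \<le> K * norm x" using K s by auto
      have gb: "\<forall>u\<in>{0..s}. norm (W u) \<le> (m * (K * onorm P) ^ n) * u ^ n / fact n"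
        using Suc.IH s by auto
      have "norm (W s) = norm (conv W s)" using eq[OF s0] by simp
      also have "\<dots> \<le> K * onorm P * (m * (K * onorm P) ^ n) * s ^ Suc n / fact (Suc n)"
        by (rule conv_bound_poly[OF W s0 Ks K0 gb])
      also have "\<dots> = (m * (K * onorm P) ^ Suc n) * s ^ Suc n / fact (Suc n)"
        by (simp add: mult_ac)
      finally show "norm (W s) \<le> (m * (K * onorm P) ^ Suc n) * s ^ Suc n / fact (Suc n)" .
    qed
  qed
  have le: "norm (W t0) \<le> m * ((K * onorm P * t0) ^ n / fact n)" for n
  proof -
    have "norm (W t0) \<le> (m * (K * onorm P) ^ n) * t0 ^ n / fact n" using ind t0 by auto
    also have "\<dots> = m * ((K * onorm P * t0) ^ n / fact n)" by (simp add: power_mult_distrib mult_ac)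
    finally show ?thesis .
  qed
  have lim: "(\<lambda>n. m * ((K * onorm P * t0) ^ n / fact n)) \<longlonglongrightarrow> 0"
    using summable_LIMSEQ_zero[OF summable_mult[OF exp_summable, of m "K * onorm P * t0"]] .
  have "norm (W t0) \<le> 0"
    by (rule LIMSEQ_le_const[OF lim]) (use le in blast)
  then show ?thesis by simp
qed

lemma Sg_semigroup:
  assumes r: "0 \<le> r" and t: "0 \<le> t"
  shows "Sg (t + r) x = Sg t (Sg r x)"
proof -
  define V1 where "V1 s = Sg (s + r) x" for s
  define V2 where "V2 s = Sg s (Sg r x)" for s
  have V1c: "continuous_on {0..} V1"
  proof -
    have "continuous_on {0..} (\<lambda>s. s + r)" by (intro continuous_intros)
    moreover have "(\<lambda>s. s + r) ` {0..} \<subseteq> {0..}" using r by auto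
    ultimately show ?thesis unfolding V1_def using continuous_on_compose2[OF Sg_cont] by blast
  qed
  have V2c: "continuous_on {0..} V2" unfolding V2_def by (rule Sg_cont)
  have eq1: "V1 u = T u (Sg r x) + conv V1 u" if u: "0 \<le> u" for u
  proof -
    define g where "g s = Sg s x" for s
    have gc: "continuous_on {0..} g" unfolding g_def by (rule Sg_cont)
    define I where "I s = T (u + r - s) (P (g s))" for s
    have ur: "0 \<le> u + r" using u r by simp
    have Iint: "I integrable_on {0..u + r}" unfolding I_def by (rule integrand_int[OF gc ur])
    have "Sg (u + r) x = T (u + r) x + conv g (u + r)" unfolding g_def by (rule Sg_eq[OF ur])
    also have "conv g (u + r) = integral {0..r} I + integral {r..u + r} I"
      unfolding conv_def I_def[symmetric]
      by (rule Henstock_Kurzweil_Integration.integral_combine[OF r _ Iint, symmetric]) (use u in simp)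
    also have "integral {0..r} I = T u (Sg r x - T r x)"
    proof -
      have "integral {0..r} I = integral {0..r} (T u \<circ> (\<lambda>s. T (r - s) (P (g s))))"
      proof (rule integral_cong)
        fix s assume s: "s \<in> {0..r}"
        show "I s = (T u \<circ> (\<lambda>s. T (r - s) (P (g s)))) s"
          unfolding I_def using Tadd[of u "r - s" "P (g s)"] u s by (simp add: add_diff_eq)
      qed
      also have "\<dots> = T u (conv g r)"
        unfolding conv_def by (rule integral_linear[OF integrand_int[OF gc r] bl[OF u]])
      also have "conv g r = Sg r x - T r x" using Sg_eq[OF r, of x] unfolding g_def by simp
      finally show ?thesis .
    qed
    also have "integral {r..u + r} I = conv V1 u"
    proof -
      have "integral {0..u} (I \<circ> (+) r) = integral {0 + r..u + r} I" by (rule integral_shift_Icc_real)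
      moreover have "integral {0..u} (I \<circ> (+) r) = conv V1 u"
        unfolding conv_def
      proof (rule integral_cong)
        fix s assume s: "s \<in> {0..u}"
        show "(I \<circ> (+) r) s = T (u - s) (P (V1 s))"
        proof -
          show ?thesis unfolding I_def g_def V1_def comp_def by (subst add.commute[of s r]) simp
        qed
      qed
      ultimately show ?thesis by simp
    qed
    finally have "V1 u = T (u + r) x + (T u (Sg r x - T r x) + conv V1 u)" unfolding V1_def .
    also have "T (u + r) x = T u (T r x)" using Tadd u r by simp
    finally show ?thesis using u by (simp add: T_diff)
  qed
  have eq2: "V2 u = T u (Sg r x) + conv V2 u" if u: "0 \<le> u" for u
    unfolding V2_def by (rule Sg_eq[OF u])
  define W where "W s = V1 s - V2 s" for s
  have Wc: "continuous_on {0..} W" unfolding W_def by (intro continuous_on_diff V1c V2c)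
  have Weq: "W u = conv W u" if u: "0 \<le> u" for u
  proof -
    have "W u = conv V1 u - conv V2 u" unfolding W_def using eq1[OF u] eq2[OF u] by simp
    also have "\<dots> = conv W u" unfolding W_def by (rule conv_diff[OF V1c V2c u, symmetric])
    finally show ?thesis .
  qed
  have "W t = 0" by (rule uniq[OF Wc Weq t])
  then show ?thesis unfolding W_def V1_def V2_def by simp
qed

lemma conv_quot: "((\<lambda>h. (1 / h) *\<^sub>R conv (\<lambda>s. Sg s x) h) \<longlongrightarrow> P x) (at_right 0)"
proof (rule tendstoI)
  fix e :: real assume e: "e > 0"
  define g where "g s = Sg s x" for s
  have gc: "continuous_on {0..} g" unfolding g_def by (rule Sg_cont)
  define H where "H p = T (fst p) (P (g (snd p)))" for p
  define S where "S = {0..(1::real)} \<times> {0..(1::real)}"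
  have Hc: "continuous_on S H" unfolding H_def S_def using joint[OF Pg_cont[OF gc, of 1]] by simp
  have p0: "(0, 0) \<in> S" by (simp add: S_def)
  have H0: "H (0, 0) = P x" by (simp add: H_def g_def Sg0)
  have e2: "e / 2 > 0" using e by simp
  obtain d where d: "d > 0" "\<forall>p\<in>S. dist p (0, 0) < d \<longrightarrow> dist (H p) (H (0, 0)) < e / 2"
    using Hc[unfolded continuous_on_iff, rule_format, OF p0 e2] by blast
  show "\<forall>\<^sub>F h in at_right 0. dist ((1 / h) *\<^sub>R conv (\<lambda>s. Sg s x) h) (P x) < e"
    unfolding eventually_at_right_field
  proof (intro exI[of _ "min 1 (d / 2)"] conjI allI impI)
    show "0 < min 1 (d / 2)" using d by simp
    fix h :: real assume h0: "0 < h" and h1: "h < min 1 (d / 2)"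
    have h: "0 \<le> h" using h0 by simp
    have Ic: "(\<lambda>s. T (h - s) (P (g s))) integrable_on {0..h}" by (rule integrand_int[OF gc h])
    have cint: "(\<lambda>s. P x) integrable_on {0..h}" by (rule integrable_continuous_real) (rule continuous_on_const)
    have "conv g h - h *\<^sub>R P x = integral {0..h} (\<lambda>s. T (h - s) (P (g s)) - P x)"
      unfolding conv_def integral_diff[OF Ic cint] using h by simp
    also have "norm \<dots> \<le> integral {0..h} (\<lambda>s. e / 2)"
    proof (rule integral_norm_bound_integral)
      show "(\<lambda>s. T (h - s) (P (g s)) - P x) integrable_on {0..h}" by (rule integrable_diff[OF Ic cint])
      show "(\<lambda>s. e / 2) integrable_on {0..h}" by (rule integrable_continuous_real) (rule continuous_on_const)
      fix s assume s: "s \<in> {0..h}"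
      have pS: "(h - s, s) \<in> S" using s h1 by (auto simp: S_def)
      have "dist (h - s, s) (0, 0) = norm (h - s, s)" by (simp add: dist_norm)
      also have "\<dots> \<le> norm (h - s) + norm s" by (rule norm_Pair_le)
      also have "\<dots> = h" using s by simp
      also have "\<dots> < d" using h1 d by simp
      finally have "dist (H (h - s, s)) (H (0, 0)) < e / 2" using d pS by blast
      then show "norm (T (h - s) (P (g s)) - P x) \<le> e / 2"
        unfolding H0 by (simp add: H_def dist_norm)
    qed
    also have "\<dots> = h * (e / 2)" using h by simp
    finally have n: "norm (conv g h - h *\<^sub>R P x) \<le> h * (e / 2)" .
    have "(1 / h) *\<^sub>R conv g h - P x = (1 / h) *\<^sub>R (conv g h - h *\<^sub>R P x)"
      using h0 by (simp add: scaleR_diff_right)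
    then have "norm ((1 / h) *\<^sub>R conv g h - P x) = (1 / h) * norm (conv g h - h *\<^sub>R P x)"
      using h0 by simp
    also have "\<dots> \<le> (1 / h) * (h * (e / 2))" using n h0 by (intro mult_left_mono) auto
    also have "\<dots> = e / 2" using h0 by simp
    also have "\<dots> < e" using e by simp
    moreover have "g = (\<lambda>s. Sg s x)" by (rule ext) (simp add: g_def)
    ultimately show "dist ((1 / h) *\<^sub>R conv (\<lambda>s. Sg s x) h) (P x) < e"
      by (simp add: dist_norm)
  qed
qed

end

lemma perturb:
  fixes DA :: "'x::complex_hilbert set" and A P :: "'x \<Rightarrow> 'x"
  assumes gen: "generates_c0 DA A" and P: "bounded_clinear P"
  shows "generates_c0 DA (\<lambda>x. A x + P x)"
proof -
  obtain T where T: "c0_semigroup T"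
    and DA: "DA = {x. \<exists>y. ((\<lambda>h. (1 / h) *\<^sub>R (T h x - x)) \<longlongrightarrow> y) (at_right 0)}"
    and lim: "\<forall>x\<in>DA. ((\<lambda>h. (1 / h) *\<^sub>R (T h x - x)) \<longlongrightarrow> A x) (at_right 0)"
    using gen unfolding generates_c0_def by blast
  interpret pert T P by (intro pert.intro sg.intro pert_axioms.intro T P)
  have ev: "eventually (\<lambda>h. (1 / h) *\<^sub>R (Sg h x - x) = (1 / h) *\<^sub>R (T h x - x) + (1 / h) *\<^sub>R conv (\<lambda>s. Sg s x) h) (at_right 0)" for x
    unfolding eventually_at_right_field
  proof (intro exI[of _ 1] conjI allI impI)
    fix h :: real assume h: "0 < h" "h < 1"
    then have "Sg h x = T h x + conv (\<lambda>s. Sg s x) h" using Sg_eq by simp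
    then have e1: "Sg h x - x = (T h x - x) + conv (\<lambda>s. Sg s x) h" by (simp add: algebra_simps)
    show "(1 / h) *\<^sub>R (Sg h x - x) = (1 / h) *\<^sub>R (T h x - x) + (1 / h) *\<^sub>R conv (\<lambda>s. Sg s x) h"
      unfolding e1 by (rule scaleR_right_distrib)
  qed simp
  have eqv: "((\<lambda>h. (1 / h) *\<^sub>R (Sg h x - x)) \<longlongrightarrow> z) (at_right 0) \<longleftrightarrow>
             ((\<lambda>h. (1 / h) *\<^sub>R (T h x - x)) \<longlongrightarrow> z - P x) (at_right 0)" for x z
  proof
    assume a: "((\<lambda>h. (1 / h) *\<^sub>R (Sg h x - x)) \<longlongrightarrow> z) (at_right 0)"
    have X: "((\<lambda>h. (1 / h) *\<^sub>R (Sg h x - x) - (1 / h) *\<^sub>R conv (\<lambda>s. Sg s x) h) \<longlongrightarrow> z - P x) (at_right 0)"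
      by (rule tendsto_diff[OF a conv_quot])
    have E: "eventually (\<lambda>h. (1 / h) *\<^sub>R (Sg h x - x) - (1 / h) *\<^sub>R conv (\<lambda>s. Sg s x) h = (1 / h) *\<^sub>R (T h x - x)) (at_right 0)"
      using ev[of x] by (rule eventually_mono) simp
    show "((\<lambda>h. (1 / h) *\<^sub>R (T h x - x)) \<longlongrightarrow> z - P x) (at_right 0)"
      by (rule tendsto_cong[OF E, THEN iffD1, OF X])
  next
    assume a: "((\<lambda>h. (1 / h) *\<^sub>R (T h x - x)) \<longlongrightarrow> z - P x) (at_right 0)"
    have X: "((\<lambda>h. (1 / h) *\<^sub>R (T h x - x) + (1 / h) *\<^sub>R conv (\<lambda>s. Sg s x) h) \<longlongrightarrow> z - P x + P x) (at_right 0)"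
      by (rule tendsto_add[OF a conv_quot])
    then have X': "((\<lambda>h. (1 / h) *\<^sub>R (T h x - x) + (1 / h) *\<^sub>R conv (\<lambda>s. Sg s x) h) \<longlongrightarrow> z) (at_right 0)"
      by simp
    have E: "eventually (\<lambda>h. (1 / h) *\<^sub>R (T h x - x) + (1 / h) *\<^sub>R conv (\<lambda>s. Sg s x) h = (1 / h) *\<^sub>R (Sg h x - x)) (at_right 0)"
      using ev[of x] by (rule eventually_mono) simp
    show "((\<lambda>h. (1 / h) *\<^sub>R (Sg h x - x)) \<longlongrightarrow> z) (at_right 0)"
      by (rule tendsto_cong[OF E, THEN iffD1, OF X'])
  qed
  have c0: "c0_semigroup Sg"
    unfolding c0_semigroup_def
  proof (intro conjI allI impI)
    show "bounded_clinear (Sg t)" if "0 \<le> t" for t using Sg_bcl that by blast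
    show "Sg 0 = id" by (rule ext) (simp add: Sg0)
    show "Sg (s + t) = Sg s \<circ> Sg t" if "0 \<le> s" "0 \<le> t" for s t
      by (rule ext) (simp add: Sg_semigroup that)
    fix x
    have "((\<lambda>t. Sg t x) \<longlongrightarrow> Sg 0 x) (at 0 within {0..})"
      using Sg_cont[of x] unfolding continuous_on_def by simp
    then have "((\<lambda>t. Sg t x) \<longlongrightarrow> Sg 0 x) (at 0 within {0<..})"
      by (rule tendsto_within_subset) auto
    then show "((\<lambda>t. Sg t x) \<longlongrightarrow> x) (at_right 0)" by (simp add: Sg0)
  qed
  have dom: "DA = {x. \<exists>y. ((\<lambda>h. (1 / h) *\<^sub>R (Sg h x - x)) \<longlongrightarrow> y) (at_right 0)}"
  proof (intro set_eqI iffI)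
    fix x assume "x \<in> DA"
    then obtain y where "((\<lambda>h. (1 / h) *\<^sub>R (T h x - x)) \<longlongrightarrow> y) (at_right 0)" using DA by blast
    then have "((\<lambda>h. (1 / h) *\<^sub>R (Sg h x - x)) \<longlongrightarrow> y + P x) (at_right 0)"
      using eqv[of x "y + P x"] by simp
    then show "x \<in> {x. \<exists>y. ((\<lambda>h. (1 / h) *\<^sub>R (Sg h x - x)) \<longlongrightarrow> y) (at_right 0)}" by blast
  next
    fix x assume "x \<in> {x. \<exists>y. ((\<lambda>h. (1 / h) *\<^sub>R (Sg h x - x)) \<longlongrightarrow> y) (at_right 0)}"
    then obtain z where "((\<lambda>h. (1 / h) *\<^sub>R (Sg h x - x)) \<longlongrightarrow> z) (at_right 0)" by blast
    then have "((\<lambda>h. (1 / h) *\<^sub>R (T h x - x)) \<longlongrightarrow> z - P x) (at_right 0)"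
      using eqv[of x z] by simp
    then show "x \<in> DA" using DA by blast
  qed
  have lim2: "\<forall>x\<in>DA. ((\<lambda>h. (1 / h) *\<^sub>R (Sg h x - x)) \<longlongrightarrow> A x + P x) (at_right 0)"
  proof
    fix x assume "x \<in> DA"
    then have "((\<lambda>h. (1 / h) *\<^sub>R (T h x - x)) \<longlongrightarrow> A x) (at_right 0)" using lim by blast
    then show "((\<lambda>h. (1 / h) *\<^sub>R (Sg h x - x)) \<longlongrightarrow> A x + P x) (at_right 0)"
      using eqv[of x "A x + P x"] by simp
  qed
  show ?thesis unfolding generates_c0_def using c0 dom lim2 by blast
qed

lemma bcl_bl: "bounded_clinear f \<Longrightarrow> bounded_linear f"
  unfolding bounded_clinear_def by blast
lemma bcl_scaleC: "bounded_clinear f \<Longrightarrow> f (a *\<^sub>C x) = a *\<^sub>C f x"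
  unfolding bounded_clinear_def by blast

lemma bcl_comp: "bounded_clinear f \<Longrightarrow> bounded_clinear g \<Longrightarrow> bounded_clinear (\<lambda>x. f (g x))"
  unfolding bounded_clinear_def using bounded_linear_compose by metis

lemma bcl_id: "bounded_clinear (\<lambda>x::'a::complex_hilbert. x)"
  unfolding bounded_clinear_def by simp

lemma bcl_add: "bounded_clinear f \<Longrightarrow> bounded_clinear g \<Longrightarrow> bounded_clinear (\<lambda>x. f x + g x)"
  unfolding bounded_clinear_def by (simp add: bounded_linear_add scaleC_add_right)

lemma bcl_diff: "bounded_clinear f \<Longrightarrow> bounded_clinear g \<Longrightarrow> bounded_clinear (\<lambda>x. f x - g x)"
  unfolding bounded_clinear_def by (simp add: bounded_linear_sub scaleC_minus_right)

lemma scaleC_neg: "a *\<^sub>C (- x::'a::complex_hilbert) = - (a *\<^sub>C x)"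
  using scaleC_minus_right[of a 0 x] by simp

lemma bcl_minus: "bounded_clinear f \<Longrightarrow> bounded_clinear (\<lambda>x. - f x)"
  unfolding bounded_clinear_def by (simp add: bounded_linear_minus scaleC_neg)

lemma inv_bcl:
  fixes F :: "'a::complex_hilbert \<Rightarrow> 'a"
  assumes F: "bounded_clinear F" and b: "bij F" and k: "k > 0"
    and lb: "\<And>x. k * norm x \<le> norm (F x)"
  shows "bounded_clinear (inv F)" and "\<And>y. norm (inv F y) \<le> norm y / k"
proof -
  have FG: "F (inv F y) = y" for y using b by (simp add: bij_is_surj surj_f_inv_f)
  have GF: "inv F (F x) = x" for x using b by (simp add: bij_is_inj)
  have Fl: "bounded_linear F" using F by (rule bcl_bl)
  have add: "inv F (x + y) = inv F x + inv F y" for x y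
  proof -
    have "F (inv F x + inv F y) = x + y" by (simp add: bl_add[OF Fl] FG)
    then show ?thesis using GF by metis
  qed
  have sc: "inv F (a *\<^sub>C x) = a *\<^sub>C inv F x" for a x
  proof -
    have "F (a *\<^sub>C inv F x) = a *\<^sub>C x" by (simp add: bcl_scaleC[OF F] FG)
    then show ?thesis using GF by metis
  qed
  have nb: "norm (inv F y) \<le> norm y / k" for y
  proof -
    have "k * norm (inv F y) \<le> norm y" using lb[of "inv F y"] by (simp add: FG)
    then show ?thesis using k by (simp add: field_simps)
  qed
  then show "\<And>y. norm (inv F y) \<le> norm y / k" .
  have "bounded_linear (inv F)"
  proof (rule bounded_linear_intro[where K="1 / k"])
    show "inv F (x + y) = inv F x + inv F y" for x y by (rule add)
    show "inv F (r *\<^sub>R x) = r *\<^sub>R inv F x" for r x by (simp add: scaleR_C sc)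
    show "norm (inv F x) \<le> norm x * (1 / k)" for x using nb[of x] by simp
  qed
  then show "bounded_clinear (inv F)" unfolding bounded_clinear_def using sc by blast
qed

lemma aux_quad:
  fixes a b c :: real
  assumes c: "0 < c" and b: "0 \<le> b" and a: "0 \<le> a" and h: "c * a^2 \<le> a * b"
  shows "a \<le> b / c"
proof (cases "a = 0")
  case True then show ?thesis using b c by simp
next
  case False
  then have a0: "a > 0" using a by simp
  have "a * (c * a) \<le> a * b" using h by (simp add: power2_eq_square mult_ac)
  then have "c * a \<le> b" using a0 by simp
  then show ?thesis using c by (simp add: field_simps)
qed

lemma aux_amgm:
  fixes c :: real and y u :: "'a::real_inner"
  assumes c: "0 < c"
  shows "inner y u - c * inner y y \<le> (norm u)^2 / (4 * c)"
proof -
  have i1: "inner y u \<le> norm y * norm u" by (rule norm_cauchy_schwarz)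
  have i2: "inner y y = (norm y)^2" by (simp add: power2_norm_eq_inner)
  have "4 * c * (norm y * norm u - c * (norm y)^2) = (norm u)^2 - (norm u - 2 * c * norm y)^2"
    by (simp add: power2_eq_square algebra_simps)
  also have "\<dots> \<le> (norm u)^2" by simp
  finally have f: "norm y * norm u - c * (norm y)^2 \<le> (norm u)^2 / (4 * c)"
    using c by (simp add: field_simps)
  show ?thesis unfolding i2 using i1 f by linarith
qed

theorem lemma2p5:
  fixes DA :: "'x::complex_hilbert set"
    and A :: "'x \<Rightarrow> 'x"
    and B :: "'u::complex_hilbert \<Rightarrow> 'x"
    and C :: "'x \<Rightarrow> 'u" and D :: "'u \<Rightarrow> 'u" and Q :: "'u \<Rightarrow> 'u"
    and c :: real
  assumes sys: "impedance_passive DA A B C D"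
    and Q: "bounded_clinear Q"
    and c: "c > 0"
    and ReQ: "\<forall>u. inner (Q u) u \<ge> c * inner u u"
  shows "boundedly_invertible (\<lambda>u. u + D (Q u)) \<and>
    (let AQ = (\<lambda>x. A x - B (Q (inv (\<lambda>u. u + D (Q u)) (C x))));
         BQ = (\<lambda>u. B (inv (\<lambda>u. u + Q (D u)) u));
         CQ = (\<lambda>x. inv (\<lambda>u. u + D (Q u)) (C x));
         DQ = (\<lambda>u. inv (\<lambda>u. u + D (Q u)) (D u))
     in impedance_passive DA AQ BQ CQ DQ \<and>
        (\<forall>lam. in_resolvent_set DA AQ lam \<and> Re lam \<ge> 0 \<longrightarrow>
           (onorm (\<lambda>u. resolvent DA AQ lam (BQ u)))\<^sup>2 \<le> (1 / c) * onorm (resolvent DA AQ lam) \<and>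
           (onorm (\<lambda>x. CQ (resolvent DA AQ lam x)))\<^sup>2 \<le> (1 / c) * onorm (resolvent DA AQ lam) \<and>
           onorm (\<lambda>u. CQ (resolvent DA AQ lam (BQ u)) + DQ u) \<le> 1 / c))"
proof -
  have Bc: "bounded_clinear B" and Cc: "bounded_clinear C" and Dc: "bounded_clinear D"
    and gen: "generates_c0 DA A"
    and pass: "\<And>x u. x \<in> DA \<Longrightarrow> inner (A x + B u) x \<le> inner (C x + D u) u"
    using sys unfolding impedance_passive_def by auto
  have Bl: "bounded_linear B" using Bc by (rule bcl_bl)
  have Cl: "bounded_linear C" using Cc by (rule bcl_bl)
  have Dl: "bounded_linear D" using Dc by (rule bcl_bl)
  have Ql: "bounded_linear Q" using Q by (rule bcl_bl)
  note lin = bl_add[OF Bl] bl_diff[OF Bl] bl_zero[OF Bl] bl_add[OF Cl] bl_diff[OF Cl] bl_zero[OF Cl]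
    bl_add[OF Dl] bl_diff[OF Dl] bl_zero[OF Dl] bl_add[OF Ql] bl_diff[OF Ql] bl_zero[OF Ql]
  have zDA: "0 \<in> DA"
  proof -
    obtain T where T: "c0_semigroup T"
      and DA: "DA = {x. \<exists>y. ((\<lambda>h. (1 / h) *\<^sub>R (T h x - x)) \<longlongrightarrow> y) (at_right 0)}"
      using gen unfolding generates_c0_def by blast
    interpret sg T by (rule sg.intro[OF T])
    have E: "eventually (\<lambda>h. (0::'x) = (1 / h) *\<^sub>R (T h 0 - 0)) (at_right 0)"
      unfolding eventually_at_right_field by (intro exI[of _ 1]) (auto simp: T_zero)
    have "((\<lambda>h. (1 / h) *\<^sub>R (T h 0 - 0)) \<longlongrightarrow> (0::'x)) (at_right 0)"
      by (rule tendsto_cong[OF E, THEN iffD1]) (rule tendsto_const)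
    then show ?thesis using DA by blast
  qed
  have Dpos: "0 \<le> inner (D u) u" for u
    using pass[OF zDA, of u] by (simp add: lin)
  have Qco: "c * inner u u \<le> inner (Q u) u" for u using ReQ by blast
  have Qbij: "bij Q" by (rule coercive_bij[OF Ql c Qco])
  define MQ where "MQ = onorm Q + 1"
  have MQ0: "MQ > 0" using onorm_pos_le[OF Ql] by (simp add: MQ_def)
  have MQb: "norm (Q v) \<le> MQ * norm v" for v
  proof -
    have "norm (Q v) \<le> onorm Q * norm v" by (rule onorm[OF Ql])
    also have "\<dots> \<le> MQ * norm v" unfolding MQ_def by (intro mult_right_mono) auto
    finally show ?thesis .
  qed
  have Qlow: "c * norm v \<le> norm (Q v)" for v
  proof -
    have "c * (norm v)^2 \<le> norm v * norm (Q v)"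
    proof -
      have "c * (norm v)^2 = c * inner v v" by (simp add: power2_norm_eq_inner)
      also have "\<dots> \<le> inner (Q v) v" by (rule Qco)
      also have "\<dots> \<le> norm (Q v) * norm v" by (rule norm_cauchy_schwarz)
      finally show ?thesis by (simp add: mult.commute)
    qed
    then have "norm v \<le> norm (Q v) / c" by (intro aux_quad c) auto
    then show ?thesis using c by (simp add: field_simps)
  qed
  define Qi where "Qi = inv Q"
  have Qic: "bounded_clinear Qi" unfolding Qi_def by (rule inv_bcl(1)[OF Q Qbij c Qlow])
  have Qil: "bounded_linear Qi" using Qic by (rule bcl_bl)
  have QQi: "Q (Qi w) = w" for w unfolding Qi_def using Qbij by (simp add: bij_is_surj surj_f_inv_f)
  have QiQ: "Qi (Q v) = v" for v unfolding Qi_def using Qbij by (simp add: bij_is_inj)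
  define k where "k = c / MQ^2"
  have k0: "k > 0" using c MQ0 by (simp add: k_def)
  have Fco: "k * inner w w \<le> inner (Qi w + D w) w" for w
  proof -
    define v where "v = Qi w"
    have wv: "w = Q v" unfolding v_def by (simp add: QQi)
    have "(norm w)^2 \<le> (MQ * norm v)^2" unfolding wv using MQb[of v] by (intro power_mono) auto
    then have "(norm w)^2 \<le> MQ^2 * (norm v)^2" by (simp add: power_mult_distrib)
    then have "k * (norm w)^2 \<le> k * (MQ^2 * (norm v)^2)" using k0 by (intro mult_left_mono) auto
    also have "\<dots> = c * (norm v)^2" using MQ0 by (simp add: k_def)
    also have "\<dots> = c * inner v v" by (simp add: power2_norm_eq_inner)
    also have "\<dots> \<le> inner (Q v) v" by (rule Qco)
    also have "\<dots> = inner (Qi w) w" unfolding wv QiQ by (simp add: inner_commute)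
    finally have "k * inner w w \<le> inner (Qi w) w" by (simp add: power2_norm_eq_inner)
    then show ?thesis using Dpos[of w] by (simp add: inner_add_left)
  qed
  have Fbij: "bij (\<lambda>w. Qi w + D w)" by (rule coercive_bij[OF bounded_linear_add[OF Qil Dl] k0 Fco])
  have N_eq: "(\<lambda>u. u + D (Q u)) = (\<lambda>w. Qi w + D w) \<circ> Q" by (rule ext) (simp add: QiQ)
  have Nbij: "bij (\<lambda>u. u + D (Q u))" unfolding N_eq by (rule bij_comp[OF Qbij Fbij])
  have Nc: "bounded_clinear (\<lambda>u. u + D (Q u))" by (rule bcl_add[OF bcl_id bcl_comp[OF Dc Q]])
  have cM: "c / MQ > 0" using c MQ0 by simp
  have Nlow: "(c / MQ) * norm u \<le> norm (u + D (Q u))" for u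
  proof -
    have "c * (norm u)^2 \<le> norm u * (MQ * norm (u + D (Q u)))"
    proof -
      have "c * (norm u)^2 = c * inner u u" by (simp add: power2_norm_eq_inner)
      also have "\<dots> \<le> inner (Q u) u" by (rule Qco)
      also have "\<dots> \<le> inner (Q u) u + inner (D (Q u)) (Q u)" using Dpos[of "Q u"] by simp
      also have "\<dots> = inner (u + D (Q u)) (Q u)" by (simp add: inner_add_left inner_commute[of u "Q u"])
      also have "\<dots> \<le> norm (u + D (Q u)) * norm (Q u)" by (rule norm_cauchy_schwarz)
      also have "\<dots> \<le> norm (u + D (Q u)) * (MQ * norm u)" by (intro mult_left_mono MQb) auto
      finally show ?thesis by (simp add: mult_ac)
    qed
    then have "norm u \<le> (MQ * norm (u + D (Q u))) / c" using MQ0 by (intro aux_quad c) auto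
    then show ?thesis using c MQ0 by (simp add: field_simps)
  qed
  define Ni where "Ni = inv (\<lambda>u. u + D (Q u))"
  have Nic: "bounded_clinear Ni" unfolding Ni_def by (rule inv_bcl(1)[OF Nc Nbij cM Nlow])
  have Nil: "bounded_linear Ni" using Nic by (rule bcl_bl)
  have NNi: "Ni y + D (Q (Ni y)) = y" for y
    using surj_f_inv_f[OF bij_is_surj[OF Nbij], of y] unfolding Ni_def by simp
  have NiN: "Ni (u + D (Q u)) = u" for u
    using inv_f_f[OF bij_is_inj[OF Nbij], of u] unfolding Ni_def by simp
  have binv: "boundedly_invertible (\<lambda>u. u + D (Q u))"
    unfolding boundedly_invertible_def
  proof (intro conjI exI[of _ Ni])
    show "bounded_clinear (\<lambda>u. u + D (Q u))" by (rule Nc)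
    show "bounded_clinear Ni" by (rule Nic)
    show "Ni \<circ> (\<lambda>u. u + D (Q u)) = id" by (rule ext) (simp add: NiN)
    show "(\<lambda>u. u + D (Q u)) \<circ> Ni = id" by (rule ext) (simp add: NNi)
  qed
  define G2 where "G2 = (\<lambda>v. v - Q (Ni (D v)))"
  have invN2: "inv (\<lambda>u. u + Q (D u)) = G2"
  proof (rule inv_unique_comp)
    show "(\<lambda>u. u + Q (D u)) \<circ> G2 = id"
    proof (rule ext)
      fix v
      define a where "a = Ni (D v)"
      have aN: "a + D (Q a) = D v" unfolding a_def by (rule NNi)
      have DG: "D (G2 v) = a" unfolding G2_def a_def[symmetric] using aN by (simp add: lin algebra_simps)
      show "((\<lambda>u. u + Q (D u)) \<circ> G2) v = id v" using DG by (simp add: G2_def a_def)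
    qed
    show "G2 \<circ> (\<lambda>u. u + Q (D u)) = id"
    proof (rule ext)
      fix u
      have "D (u + Q (D u)) = D u + D (Q (D u))" by (simp add: lin)
      then have "Ni (D (u + Q (D u))) = D u" by (simp add: NiN)
      then show "(G2 \<circ> (\<lambda>u. u + Q (D u))) u = id u" by (simp add: G2_def)
    qed
  qed
  have G2c: "bounded_clinear G2" unfolding G2_def
    by (rule bcl_diff[OF bcl_id bcl_comp[OF Q bcl_comp[OF Nic Dc]]])
  define P where "P = (\<lambda>x. - B (Q (Ni (C x))))"
  have Pc: "bounded_clinear P" unfolding P_def
    by (rule bcl_minus[OF bcl_comp[OF Bc bcl_comp[OF Q bcl_comp[OF Nic Cc]]]])
  have AQ_eq: "(\<lambda>x. A x - B (Q (Ni (C x)))) = (\<lambda>x. A x + P x)" by (rule ext) (simp add: P_def)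
  have genQ: "generates_c0 DA (\<lambda>x. A x - B (Q (Ni (C x))))"
    unfolding AQ_eq by (rule perturb[OF gen Pc])
  have key: "inner (A x - B (Q (Ni (C x))) + B (G2 v)) x
      \<le> inner (Ni (C x) + Ni (D v)) v - c * inner (Ni (C x) + Ni (D v)) (Ni (C x) + Ni (D v))"
    if x: "x \<in> DA" for x v
  proof -
    define y where "y = Ni (C x) + Ni (D v)"
    define w where "w = v - Q y"
    have y2: "y = Ni (C x + D v)" unfolding y_def by (simp add: bl_add[OF Nil])
    have yN: "y + D (Q y) = C x + D v" unfolding y2 by (rule NNi)
    have e1: "A x - B (Q (Ni (C x))) + B (G2 v) = A x + B w"
      unfolding G2_def w_def y_def by (simp add: lin algebra_simps)
    have e2: "C x + D w = y" unfolding w_def using yN by (simp add: lin algebra_simps)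
    have "inner (A x + B w) x \<le> inner (C x + D w) w" by (rule pass[OF x])
    also have "\<dots> = inner y v - inner y (Q y)" unfolding e2 by (simp add: w_def inner_diff_right)
    also have "\<dots> \<le> inner y v - c * inner y y" using Qco[of y] by (simp add: inner_commute)
    finally show ?thesis unfolding e1 y_def .
  qed
  have ipQ: "impedance_passive DA (\<lambda>x. A x - B (Q (Ni (C x)))) (\<lambda>u. B (G2 u)) (\<lambda>x. Ni (C x)) (\<lambda>u. Ni (D u))"
    unfolding impedance_passive_def
  proof (intro conjI ballI allI)
    show "bounded_clinear (\<lambda>u. B (G2 u))" by (rule bcl_comp[OF Bc G2c])
    show "bounded_clinear (\<lambda>x. Ni (C x))" by (rule bcl_comp[OF Nic Cc])
    show "bounded_clinear (\<lambda>u. Ni (D u))" by (rule bcl_comp[OF Nic Dc])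
    show "generates_c0 DA (\<lambda>x. A x - B (Q (Ni (C x))))" by (rule genQ)
    fix x u assume x: "x \<in> DA"
    have "0 \<le> c * inner (Ni (C x) + Ni (D u)) (Ni (C x) + Ni (D u))" using c by simp
    then show "inner (A x - B (Q (Ni (C x))) + B (G2 u)) x \<le> inner (Ni (C x) + Ni (D u)) u"
      using key[OF x, of u] by linarith
  qed
  have est: "(onorm (\<lambda>u. resolvent DA (\<lambda>x. A x - B (Q (Ni (C x)))) lam (B (G2 u))))\<^sup>2
              \<le> (1 / c) * onorm (resolvent DA (\<lambda>x. A x - B (Q (Ni (C x)))) lam) \<and>
           (onorm (\<lambda>x. Ni (C (resolvent DA (\<lambda>x. A x - B (Q (Ni (C x)))) lam x))))\<^sup>2
              \<le> (1 / c) * onorm (resolvent DA (\<lambda>x. A x - B (Q (Ni (C x)))) lam) \<and>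
           onorm (\<lambda>u. Ni (C (resolvent DA (\<lambda>x. A x - B (Q (Ni (C x)))) lam (B (G2 u)))) + Ni (D u)) \<le> 1 / c"
    if lr: "in_resolvent_set DA (\<lambda>x. A x - B (Q (Ni (C x)))) lam" and rl: "Re lam \<ge> 0" for lam
  proof -
    define AQ where "AQ = (\<lambda>x. A x - B (Q (Ni (C x))))"
    define f where "f = (\<lambda>x. lam *\<^sub>C x - AQ x)"
    define R where "R = resolvent DA AQ lam"
    have bb: "bij_betw f DA UNIV" and Rc: "bounded_clinear R"
      using lr unfolding in_resolvent_set_def f_def AQ_def R_def resolvent_def by blast+
    have Rl: "bounded_linear R" using Rc by (rule bcl_bl)
    have inj: "inj_on f DA" using bb by (rule bij_betw_imp_inj_on)
    have img: "z \<in> f ` DA" for z using bij_betw_imp_surj_on[OF bb] by simp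
    have Rin: "R z \<in> DA" for z
      unfolding R_def resolvent_def f_def[symmetric] by (rule the_inv_into_into[OF inj img subset_refl])
    have fR: "f (R z) = z" for z
      unfolding R_def resolvent_def f_def[symmetric] by (rule f_the_inv_into_f[OF inj img])
    define r where "r = onorm R"
    have r0: "r \<ge> 0" unfolding r_def by (rule onorm_pos_le[OF Rl])
    have Rb: "norm (R z) \<le> r * norm z" for z unfolding r_def by (rule onorm[OF Rl])
    have KI: "0 \<le> inner G (R (G + B (G2 u)))
        + (inner (Ni (C (R (G + B (G2 u)))) + Ni (D u)) u
           - c * inner (Ni (C (R (G + B (G2 u)))) + Ni (D u)) (Ni (C (R (G + B (G2 u)))) + Ni (D u)))" for G u
    proof -
      define x where "x = R (G + B (G2 u))"
      have xin: "x \<in> DA" unfolding x_def by (rule Rin)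
      have fx: "lam *\<^sub>C x - AQ x = G + B (G2 u)" using fR[of "G + B (G2 u)"] unfolding f_def x_def by simp
      have e: "A x - B (Q (Ni (C x))) + B (G2 u) = lam *\<^sub>C x - G"
      proof -
        have "A x - B (Q (Ni (C x))) = AQ x" by (simp add: AQ_def)
        then show ?thesis using fx by (simp add: algebra_simps)
      qed
      have k1: "inner (lam *\<^sub>C x - G) x \<le> inner (Ni (C x) + Ni (D u)) u - c * inner (Ni (C x) + Ni (D u)) (Ni (C x) + Ni (D u))"
        using key[OF xin, of u] unfolding e .
      have "inner (lam *\<^sub>C x - G) x = Re lam * inner x x - inner G x"
        by (simp add: inner_diff_left inner_scaleC_self)
      moreover have "0 \<le> Re lam * inner x x" using rl by simp
      ultimately show ?thesis using k1 unfolding x_def by linarith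
    qed
    have Bz: "B (G2 0) = 0" using bl_zero[OF bcl_bl[OF bcl_comp[OF Bc G2c]]] by simp
    have Niz: "Ni (D 0) = 0" using bl_zero[OF bcl_bl[OF bcl_comp[OF Nic Dc]]] by simp
    have Hl: "bounded_linear (\<lambda>u. Ni (C (R (B (G2 u)))) + Ni (D u))"
      by (rule bcl_bl[OF bcl_add[OF bcl_comp[OF Nic bcl_comp[OF Cc bcl_comp[OF Rc bcl_comp[OF Bc G2c]]]] bcl_comp[OF Nic Dc]]])
    have Pl: "bounded_linear (\<lambda>x. Ni (C (R x)))"
      by (rule bcl_bl[OF bcl_comp[OF Nic bcl_comp[OF Cc Rc]]])
    have Kl: "bounded_linear (\<lambda>u. R (B (G2 u)))"
      by (rule bcl_bl[OF bcl_comp[OF Rc bcl_comp[OF Bc G2c]]])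
    have b3: "norm (Ni (C (R (B (G2 u)))) + Ni (D u)) \<le> 1 / c * norm u" for u
    proof -
      define y where "y = Ni (C (R (B (G2 u)))) + Ni (D u)"
      have "0 \<le> inner y u - c * inner y y" using KI[of 0 u] unfolding y_def by simp
      then have "c * (norm y)^2 \<le> norm y * norm u"
        using norm_cauchy_schwarz[of y u] by (simp add: power2_norm_eq_inner)
      then have "norm y \<le> norm u / c" by (intro aux_quad c) auto
      then show ?thesis unfolding y_def by simp
    qed
    have E3: "onorm (\<lambda>u. Ni (C (R (B (G2 u)))) + Ni (D u)) \<le> 1 / c"
      by (rule onorm_bound) (use c b3 in auto)
    have b2: "norm (Ni (C (R G))) \<le> sqrt (r / c) * norm G" for G
    proof -
      define y where "y = Ni (C (R G))"
      have "0 \<le> inner G (R G) - c * inner y y" using KI[of G 0] unfolding y_def Bz Niz by simp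
      moreover have "inner G (R G) \<le> r * (norm G)^2"
      proof -
        have "inner G (R G) \<le> norm G * norm (R G)" by (rule norm_cauchy_schwarz)
        also have "\<dots> \<le> norm G * (r * norm G)" by (intro mult_left_mono Rb) auto
        finally show ?thesis by (simp add: power2_eq_square mult_ac)
      qed
      ultimately have "c * (norm y)^2 \<le> r * (norm G)^2" by (simp add: power2_norm_eq_inner)
      then have "(norm y)^2 \<le> (r / c) * (norm G)^2" using c by (simp add: field_simps)
      then have "sqrt ((norm y)^2) \<le> sqrt ((r / c) * (norm G)^2)" by (rule real_sqrt_le_mono)
      moreover have "sqrt ((r / c) * (norm G)^2) = sqrt (r / c) * norm G"
        by (simp only: real_sqrt_mult real_sqrt_abs abs_norm_cancel)
      moreover have "sqrt ((norm y)^2) = norm y" by (simp only: real_sqrt_abs abs_norm_cancel)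
      ultimately show ?thesis unfolding y_def by simp
    qed
    have E2a: "onorm (\<lambda>x. Ni (C (R x))) \<le> sqrt (r / c)"
      by (rule onorm_bound) (use b2 r0 c in auto)
    have E2: "(onorm (\<lambda>x. Ni (C (R x))))^2 \<le> (1 / c) * r"
    proof -
      have "(onorm (\<lambda>x. Ni (C (R x))))^2 \<le> (sqrt (r / c))^2"
        using E2a onorm_pos_le[OF Pl] by (rule power_mono)
      also have "\<dots> = (1 / c) * r" using r0 c by simp
      finally show ?thesis .
    qed
    have b1: "(norm (R (B (G2 u))))^2 \<le> (r / c) * (norm u)^2" for u
    proof (cases "r = 0")
      case True
      have "norm (R (B (G2 u))) \<le> 0" using Rb[of "B (G2 u)"] True by simp
      then show ?thesis using True by simp
    next
      case False
      then have rp: "r > 0" using r0 by simp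
      define K where "K = R (B (G2 u))"
      define t where "t = 1 / (2 * r)"
      define G where "G = - (t *\<^sub>R K)"
      define y where "y = Ni (C (R (G + B (G2 u)))) + Ni (D u)"
      have RG: "R (G + B (G2 u)) = - (t *\<^sub>R R K) + K"
        unfolding G_def K_def by (simp add: bl_add[OF Rl] bl_diff[OF Rl] bl_minus[OF Rl] bl_scaleR[OF Rl])
      have k: "0 \<le> inner G (R (G + B (G2 u))) + (inner y u - c * inner y y)"
        using KI[of G u] unfolding y_def .
      have iG: "inner G (R (G + B (G2 u))) = t^2 * inner K (R K) - t * (norm K)^2"
        unfolding RG
        by (simp add: G_def inner_diff_right power2_norm_eq_inner power2_eq_square[of t] algebra_simps)
      have iK: "inner K (R K) \<le> r * (norm K)^2"
      proof -
        have "inner K (R K) \<le> norm K * norm (R K)" by (rule norm_cauchy_schwarz)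
        also have "\<dots> \<le> norm K * (r * norm K)" by (intro mult_left_mono Rb) auto
        finally show ?thesis by (simp add: power2_eq_square mult_ac)
      qed
      have am: "inner y u - c * inner y y \<le> (norm u)^2 / (4 * c)" by (rule aux_amgm[OF c])
      have "t^2 * inner K (R K) \<le> t^2 * (r * (norm K)^2)" using iK by (intro mult_left_mono) auto
      then have "0 \<le> t^2 * (r * (norm K)^2) - t * (norm K)^2 + (norm u)^2 / (4 * c)"
        using k iG am by linarith
      moreover have "t^2 * (r * (norm K)^2) - t * (norm K)^2 = -((norm K)^2 / (4 * r))"
        using rp by (simp add: t_def power2_eq_square field_simps)
      ultimately have "(norm K)^2 / (4 * r) \<le> (norm u)^2 / (4 * c)" by linarith
      then have "(norm K)^2 \<le> 4 * r * ((norm u)^2 / (4 * c))" using rp by (simp add: field_simps)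
      also have "\<dots> = (r / c) * (norm u)^2" using c by (simp add: field_simps)
      finally show ?thesis unfolding K_def .
    qed
    have b1': "norm (R (B (G2 u))) \<le> sqrt (r / c) * norm u" for u
    proof -
      have "sqrt ((norm (R (B (G2 u))))^2) \<le> sqrt ((r / c) * (norm u)^2)" using b1 by (rule real_sqrt_le_mono)
      moreover have "sqrt ((r / c) * (norm u)^2) = sqrt (r / c) * norm u"
        by (simp only: real_sqrt_mult real_sqrt_abs abs_norm_cancel)
      moreover have "sqrt ((norm (R (B (G2 u))))^2) = norm (R (B (G2 u)))" by (simp only: real_sqrt_abs abs_norm_cancel)
      ultimately show ?thesis by simp
    qed
    have E1a: "onorm (\<lambda>u. R (B (G2 u))) \<le> sqrt (r / c)"
      by (rule onorm_bound) (use b1' r0 c in auto)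
    have E1: "(onorm (\<lambda>u. R (B (G2 u))))^2 \<le> (1 / c) * r"
    proof -
      have "(onorm (\<lambda>u. R (B (G2 u))))^2 \<le> (sqrt (r / c))^2"
        using E1a onorm_pos_le[OF Kl] by (rule power_mono)
      also have "\<dots> = (1 / c) * r" using r0 c by simp
      finally show ?thesis .
    qed
    show ?thesis using E1 E2 E3 unfolding R_def r_def AQ_def by blast
  qed
  show ?thesis
    unfolding Let_def Ni_def[symmetric] invN2
    using binv ipQ est by blast
qed

end
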